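(* Let $D_1\subset\mathbb{R}^2$ be an open disc centered at the origin, let $\boldsymbol{\gamma}_1,\dots,\boldsymbol{\gamma}_m$ be distinct unit vectors in $\mathbb{R}^2$ and $c_1,\dots,c_m$ nonzero reals, and suppose the set $\mathcal{Z}_1\cup\mathcal{Z}_2$ is finite. Then for every vector field $\mathbf{f}$ on $\mathbb{R}^2$ with components in $C^2_c(D_1)$, the function $(\boldsymbol{\psi},s)\mapsto Q(\boldsymbol{\psi})\frac{d}{ds}\mathcal{R}(\mathcal{S}\mathbf{f})(\boldsymbol{\psi},s)$, defined for $\boldsymbol{\psi}\in\mathbb{S}^1\setminus(\mathcal{Z}_1\cup\mathcal{Z}_2)$, extends continuously to all of $\mathbb{S}^1\times\mathbb{R}$ and equals $\mathcal{R}\mathbf{f}$ there; consequently $\mathbf{f}(\mathbf{x})$ is recovered at every $\mathbf{x}\in D_1$ by applying the inverse Radon transform $\mathcal{R}^{-1}$ (componentwise) to this function. In particular, $\mathbf{f}$ is uniquely determined by $\mathcal{S}\mathbf{f}$.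
   Context: For $\mathbf{x}=(x_1,x_2)$ set $\mathbf{x}^\perp=(-x_2,x_1)$. For a unit vector $\boldsymbol{\gamma}$, $\mathcal{X}_{\boldsymbol{\gamma}}h(\mathbf{x})=\int_0^\infty h(\mathbf{x}+t\boldsymbol{\gamma})\,dt$. The vector-valued star transform is $\mathcal{S}\mathbf{f}=\sum_{i=1}^m c_i\,\mathcal{X}_{\boldsymbol{\gamma}_i}\begin{bmatrix}\mathbf{f}\cdot\boldsymbol{\gamma}_i\\ \mathbf{f}\cdot\boldsymbol{\gamma}_i^\perp\end{bmatrix}$. $\mathcal{R}h(\boldsymbol{\psi},s)=\int_{\mathbb{R}}h(s\boldsymbol{\psi}+t\boldsymbol{\psi}^\perp)\,dt$ is the Radon transform, applied componentwise to vector-valued functions. $\mathcal{Z}_1=\bigcup_{i}\{\boldsymbol{\psi}\in\mathbb{S}^1:\boldsymbol{\psi}\cdot\boldsymbol{\gamma}_i=0\}$; for $\boldsymbol{\psi}\in\mathbb{S}^1\setminus\mathcal{Z}_1$, $\boldsymbol{\gamma}(\boldsymbol{\psi})=-\sum_{i}\frac{c_i\boldsymbol{\gamma}_i}{\boldsymbol{\psi}\cdot\boldsymbol{\gamma}_i}$; $\mathcal{Z}_2=\{\boldsymbol{\psi}\in\mathbb{S}^1\setminus\mathcal{Z}_1:\boldsymbol{\gamma}(\boldsymbol{\psi})=0\}$; and for $\boldsymbol{\psi}\notin\mathcal{Z}_1\cup\mathcal{Z}_2$, $Q(\boldsymbol{\psi})$ is the inverse of the $2\times2$ matrix with rows $\boldsymbol{\gamma}(\boldsymbol{\psi})$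 and $\boldsymbol{\gamma}(\boldsymbol{\psi})^\perp$. *)

theory Defs
  imports "HOL-Analysis.Analysis"
begin

definition perp :: "real^2 \<Rightarrow> real^2" where
  "perp x = vector [- (x$2), x$1]"

definition divbeam :: "real^2 \<Rightarrow> (real^2 \<Rightarrow> real) \<Rightarrow> real^2 \<Rightarrow> real" where
  "divbeam g h x = integral {0..} (\<lambda>t. h (x + t *\<^sub>R g))"

definition star_transform ::
  "nat \<Rightarrow> (nat \<Rightarrow> real) \<Rightarrow> (nat \<Rightarrow> real^2) \<Rightarrow> (real^2 \<Rightarrow> real^2) \<Rightarrow> real^2 \<Rightarrow> real^2" where
  "star_transform m c gam f x =
     (\<Sum>i<m. c i *\<^sub>R vector [divbeam (gam i) (\<lambda>y. f y \<bullet> gam i) x,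
                               divbeam (gam i) (\<lambda>y. f y \<bullet> perp (gam i)) x])"

definition radon :: "(real^2 \<Rightarrow> 'b::euclidean_space) \<Rightarrow> real^2 \<Rightarrow> real \<Rightarrow> 'b" where
  "radon h psi s = integral UNIV (\<lambda>t. h (s *\<^sub>R psi + t *\<^sub>R perp psi))"

definition Z1 :: "nat \<Rightarrow> (nat \<Rightarrow> real^2) \<Rightarrow> (real^2) set" where
  "Z1 m gam = (\<Union>i<m. {psi \<in> sphere 0 1. psi \<bullet> gam i = 0})"

definition gamma_psi :: "nat \<Rightarrow> (nat \<Rightarrow> real) \<Rightarrow> (nat \<Rightarrow> real^2) \<Rightarrow> real^2 \<Rightarrow> real^2" where
  "gamma_psi m c gam psi = - (\<Sum>i<m. (c i / (psi \<bullet> gam i)) *\<^sub>R gam i)"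

definition Z2 :: "nat \<Rightarrow> (nat \<Rightarrow> real) \<Rightarrow> (nat \<Rightarrow> real^2) \<Rightarrow> (real^2) set" where
  "Z2 m c gam = {psi \<in> sphere 0 1 - Z1 m gam. gamma_psi m c gam psi = 0}"

definition Qmat :: "nat \<Rightarrow> (nat \<Rightarrow> real) \<Rightarrow> (nat \<Rightarrow> real^2) \<Rightarrow> real^2 \<Rightarrow> real^2^2" where
  "Qmat m c gam psi =
     matrix_inv (vector [gamma_psi m c gam psi, perp (gamma_psi m c gam psi)] :: real^2^2)"

definition C2 :: "(real^2 \<Rightarrow> real) \<Rightarrow> bool" where
  "C2 h \<longleftrightarrow> (\<exists>(D :: real^2 \<Rightarrow> ((real^2) \<Rightarrow>\<^sub>L real))
                 (D2 :: real^2 \<Rightarrow> ((real^2) \<Rightarrow>\<^sub>L ((real^2) \<Rightarrow>\<^sub>L real))).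
      (\<forall>x. (h has_derivative blinfun_apply (D x)) (at x)) \<and>
      (\<forall>x. (D has_derivative blinfun_apply (D2 x)) (at x)) \<and>
      continuous_on UNIV D2)"

definition C2c_field :: "(real^2) set \<Rightarrow> (real^2 \<Rightarrow> real^2) \<Rightarrow> bool" where
  "C2c_field U f \<longleftrightarrow> (\<forall>j. C2 (\<lambda>x. f x $ j)) \<and>
      compact (closure {x. f x \<noteq> 0}) \<and> closure {x. f x \<noteq> 0} \<subseteq> U"

definition hilbert :: "(real \<Rightarrow> 'b::euclidean_space) \<Rightarrow> real \<Rightarrow> 'b" where
  "hilbert g t = (1 / pi) *\<^sub>R
     Lim (at_right 0) (\<lambda>\<epsilon>. integral {s. \<epsilon> \<le> \<bar>t - s\<bar>} (\<lambda>s. (1 / (t - s)) *\<^sub>R g s))"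

definition radon_inverse :: "(real^2 \<Rightarrow> real \<Rightarrow> 'b::euclidean_space) \<Rightarrow> real^2 \<Rightarrow> 'b" where
  "radon_inverse G x = (1 / (4 * pi)) *\<^sub>R
     integral {0..2*pi} (\<lambda>\<theta>. let psi = vector [cos \<theta>, sin \<theta>] :: real^2 in
        hilbert (\<lambda>s. vector_derivative (\<lambda>u. G psi u) (at s)) (x \<bullet> psi))"

end

theory Submission
  imports Defs
begin


definition om :: "real \<Rightarrow> real^2" where "om a = vector [cos a, sin a]"

lemma perp_comp[simp]: "perp x $ 1 = - (x$2)" "perp x $ 2 = x$1"
  by (simp_all add: perp_def)

lemma inner2: "(x::real^2) \<bullet> y = x$1 * y$1 + x$2 * y$2"
  by (simp add: inner_vec_def sum_2)

lemma vec2_eq: "(x::'a^2) = y \<longleftrightarrow> x$1 = y$1 \<and> x$2 = y$2"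
  by (simp add: vec_eq_iff forall_2)

lemma om_comp[simp]: "om a $ 1 = cos a" "om a $ 2 = sin a"
  by (simp_all add: om_def)

lemma norm2: "norm (x::real^2) = sqrt ((x$1)^2 + (x$2)^2)"
  by (simp add: norm_eq_sqrt_inner inner2 power2_eq_square)

lemma norm_om[simp]: "norm (om a) = 1"
  by (simp add: norm2)

lemma perp_inner_self[simp]: "perp x \<bullet> x = 0" "x \<bullet> perp x = 0"
  by (simp_all add: inner2)

lemma perp_perp_inner[simp]: "perp x \<bullet> perp y = x \<bullet> y"
  by (simp add: inner2)

lemma norm_perp[simp]: "norm (perp x) = norm x"
  by (simp add: norm_eq_sqrt_inner)

lemma perp_add: "perp (x + y) = perp x + perp y"
  by (simp add: vec2_eq)
lemma perp_scaleR: "perp (c *\<^sub>R x) = c *\<^sub>R perp x"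
  by (simp add: vec2_eq)
lemma perp_minus: "perp (- x) = - perp x"
  by (simp add: vec2_eq)
lemma perp_sum: "perp (sum g S) = sum (\<lambda>i. perp (g i)) S"
  by (induction S rule: infinite_finite_induct) (auto simp: perp_add vec2_eq perp_def)
lemma linear_perp: "linear perp"
  by (rule linearI) (simp_all add: perp_add perp_scaleR)

lemma perp_om: "perp (om a) = om (a + pi/2)"
  by (simp add: vec2_eq cos_add sin_add)

lemma om_add: "om (a + b) = cos b *\<^sub>R om a + sin b *\<^sub>R perp (om a)"
  by (simp add: vec2_eq cos_add sin_add algebra_simps)

lemma om_periodic: "om (a + 2*pi) = om a"
  by (simp add: om_def)

lemma decomp_unit: "norm (e::real^2) = 1 \<Longrightarrow> x = (x \<bullet> e) *\<^sub>R e + (x \<bullet> perp e) *\<^sub>R perp e"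
proof -
  assume "norm e = 1"
  then have h: "(e$1)^2 + (e$2)^2 = 1" by (simp add: norm2)
  show ?thesis
    unfolding vec2_eq
  proof (intro conjI)
    have "x$1 = x$1 * ((e$1)^2 + (e$2)^2)" using h by simp
    then show "x $ 1 = ((x \<bullet> e) *\<^sub>R e + (x \<bullet> perp e) *\<^sub>R perp e) $ 1"
      by (simp add: inner2 perp_def algebra_simps power2_eq_square)
    have "x$2 = x$2 * ((e$1)^2 + (e$2)^2)" using h by simp
    then show "x $ 2 = ((x \<bullet> e) *\<^sub>R e + (x \<bullet> perp e) *\<^sub>R perp e) $ 2"
      by (simp add: inner2 perp_def algebra_simps power2_eq_square)
  qed
qed

lemma abs_inner_unit_le: "norm (e::real^2) = 1 \<Longrightarrow> \<bar>x \<bullet> e\<bar> \<le> norm x"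
  using Cauchy_Schwarz_ineq2[of x e] by simp


lemma supp_has_integral:
  fixes g :: "real \<Rightarrow> 'b::euclidean_space"
  assumes "continuous_on {a..b} g" "\<And>t. t \<notin> {a..b} \<Longrightarrow> g t = 0"
  shows "(g has_integral integral {a..b} g) UNIV"
  by (rule has_integral_on_superset[OF integrable_integral[OF integrable_continuous_real[OF assms(1)]]])
     (use assms in auto)

lemma supp_integral_eq:
  fixes g :: "real \<Rightarrow> 'b::euclidean_space"
  assumes "continuous_on UNIV g" "\<And>t. t \<notin> {a..b} \<Longrightarrow> g t = 0" "{a..b} \<subseteq> {c..d}"
  shows "integral {c..d} g = integral {a..b} g"
proof -
  have "(g has_integral integral {a..b} g) {a..b}"
    by (rule integrable_integral, rule integrable_continuous_real, rule continuous_on_subset[OF assms(1)]) auto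
  then have "(g has_integral integral {a..b} g) {c..d}"
    by (rule has_integral_on_superset) (use assms in auto)
  then show ?thesis by (rule integral_unique)
qed

locale c2c =
  fixes f :: "real^2 \<Rightarrow> 'b::euclidean_space" and Df :: "real^2 \<Rightarrow> (real^2) \<Rightarrow>\<^sub>L 'b"
    and D2 :: "real^2 \<Rightarrow> (real^2) \<Rightarrow>\<^sub>L ((real^2) \<Rightarrow>\<^sub>L 'b)" and r :: real
  assumes r_pos: "0 < r"
    and fD: "\<And>x. (f has_derivative blinfun_apply (Df x)) (at x)"
    and DD: "\<And>x. (Df has_derivative blinfun_apply (D2 x)) (at x)"
    and D2c: "continuous_on UNIV D2"
    and supp: "\<And>x. r \<le> norm x \<Longrightarrow> f x = 0 \<and> Df x = 0 \<and> D2 x = 0"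
begin

lemma f_cont: "continuous_on UNIV f"
  by (rule has_derivative_continuous_on) (use fD in \<open>auto intro: has_derivative_at_withinI\<close>)

lemma Df_cont: "continuous_on UNIV Df"
  by (rule has_derivative_continuous_on) (use DD in \<open>auto intro: has_derivative_at_withinI\<close>)

lemma f_cont'[continuous_intros]: "continuous_on S g \<Longrightarrow> continuous_on S (\<lambda>x. f (g x))"
  by (rule continuous_on_compose2[OF f_cont]) auto
lemma Df_cont'[continuous_intros]: "continuous_on S g \<Longrightarrow> continuous_on S (\<lambda>x. Df (g x))"
  by (rule continuous_on_compose2[OF Df_cont]) auto
lemma D2_cont'[continuous_intros]: "continuous_on S g \<Longrightarrow> continuous_on S (\<lambda>x. D2 (g x))"
  by (rule continuous_on_compose2[OF D2c]) auto

lemma supp_e: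
  assumes "norm (e::real^2) = 1" "r \<le> \<bar>p \<bullet> e\<bar>"
  shows "f p = 0" "Df p = 0" "D2 p = 0"
  using supp[of p] abs_inner_unit_le[OF assms(1), of p] assms(2) by auto

lemma ray_deriv:
  "((\<lambda>v. f (a + v *\<^sub>R e)) has_vector_derivative blinfun_apply (Df (a + v *\<^sub>R e)) e) (at v within S)"
proof -
  have "((\<lambda>v. a + v *\<^sub>R e) has_derivative (\<lambda>h. h *\<^sub>R e)) (at v within S)"
    by (auto intro!: derivative_eq_intros)
  from has_derivative_compose[OF this fD]
  show ?thesis
    by (simp add: has_vector_derivative_def blinfun.scaleR_right o_def)
qed

lemma ray_deriv_D:
  "((\<lambda>v. blinfun_apply (Df (a + v *\<^sub>R e)) w) has_vector_derivative
      blinfun_apply (blinfun_apply (D2 (a + v *\<^sub>R e)) e) w) (at v within S)"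
proof -
  have "((\<lambda>v. a + v *\<^sub>R e) has_derivative (\<lambda>h. h *\<^sub>R e)) (at v within S)"
    by (auto intro!: derivative_eq_intros)
  from has_derivative_compose[OF this DD]
  have "((\<lambda>v. Df (a + v *\<^sub>R e)) has_derivative (\<lambda>h. h *\<^sub>R D2 (a + v *\<^sub>R e) e)) (at v within S)"
    by (simp add: blinfun.scaleR_right o_def)
  then have "((\<lambda>v. blinfun_apply (Df (a + v *\<^sub>R e)) w) has_derivative
      (\<lambda>h. blinfun_apply (h *\<^sub>R D2 (a + v *\<^sub>R e) e) w)) (at v within S)"
    by (rule bounded_linear.has_derivative[OF bounded_bilinear.bounded_linear_left[OF bounded_bilinear_blinfun_apply]])  
  then show ?thesis
    by (simp add: has_vector_derivative_def blinfun.scaleR_left)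
qed

lemma radon_int:
  assumes "norm \<theta> = 1" "r \<le> T"
  shows "((\<lambda>t. f (v *\<^sub>R \<theta> + t *\<^sub>R perp \<theta>)) has_integral
           integral {-T..T} (\<lambda>t. f (v *\<^sub>R \<theta> + t *\<^sub>R perp \<theta>))) UNIV"
    and "radon f \<theta> v = integral {-T..T} (\<lambda>t. f (v *\<^sub>R \<theta> + t *\<^sub>R perp \<theta>))"
proof -
  have n: "norm (perp \<theta>) = 1" using assms by simp
  have tt: "\<theta> \<bullet> \<theta> = 1" using assms by (simp add: norm_eq_1)
  have "((\<lambda>t. f (v *\<^sub>R \<theta> + t *\<^sub>R perp \<theta>)) has_integral
           integral {-T..T} (\<lambda>t. f (v *\<^sub>R \<theta> + t *\<^sub>R perp \<theta>))) UNIV"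
  proof (rule supp_has_integral)
    show "continuous_on {- T..T} (\<lambda>t. f (v *\<^sub>R \<theta> + t *\<^sub>R perp \<theta>))"
      by (intro continuous_intros)
    fix t assume "t \<notin> {-T..T}"
    then show "f (v *\<^sub>R \<theta> + t *\<^sub>R perp \<theta>) = 0"
      using supp_e(1)[OF n, of "v *\<^sub>R \<theta> + t *\<^sub>R perp \<theta>"] assms tt
      by (auto simp: inner_add_left)
  qed
  then show "((\<lambda>t. f (v *\<^sub>R \<theta> + t *\<^sub>R perp \<theta>)) has_integral
           integral {-T..T} (\<lambda>t. f (v *\<^sub>R \<theta> + t *\<^sub>R perp \<theta>))) UNIV"
    "radon f \<theta> v = integral {-T..T} (\<lambda>t. f (v *\<^sub>R \<theta> + t *\<^sub>R perp \<theta>))"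
    by (auto simp: radon_def dest: integral_unique)
qed

lemma decomp_om: "x = (x \<bullet> om a) *\<^sub>R om a + (x \<bullet> perp (om a)) *\<^sub>R perp (om a)"
  by (rule decomp_unit) simp

lemma radon_shift:
  assumes "r + norm x \<le> T"
  shows "radon f (om \<phi>) v =
    integral {-T..T} (\<lambda>t. f (x + (v - x \<bullet> om \<phi>) *\<^sub>R om \<phi> + t *\<^sub>R perp (om \<phi>)))"
proof -
  define \<theta> where "\<theta> = om \<phi>"
  define c where "c = x \<bullet> perp \<theta>"
  define g where "g = (\<lambda>t. f (v *\<^sub>R \<theta> + t *\<^sub>R perp \<theta>))"
  have n: "norm (perp \<theta>) = 1" "norm \<theta> = 1" by (simp_all add: \<theta>_def)
  have tt: "\<theta> \<bullet> \<theta> = 1" using n by (simp add: norm_eq_1)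
  have pt: "x + (v - x \<bullet> \<theta>) *\<^sub>R \<theta> + t *\<^sub>R perp \<theta> = v *\<^sub>R \<theta> + (t + c) *\<^sub>R perp \<theta>" for t
    using decomp_om[of x \<phi>] unfolding \<theta>_def[symmetric] c_def
    by (simp add: algebra_simps)
  have gc: "continuous_on UNIV g" unfolding g_def by (intro continuous_intros)
  have g0: "g t = 0" if "t \<notin> {-r..r}" for t
    using supp_e(1)[OF n(1), of "v *\<^sub>R \<theta> + t *\<^sub>R perp \<theta>"] that tt
    by (auto simp: g_def inner_add_left)
  have cx: "\<bar>c\<bar> \<le> norm x" unfolding c_def by (rule abs_inner_unit_le) (simp add: \<theta>_def)
  have "integral {-T..T} (\<lambda>t. f (x + (v - x \<bullet> \<theta>) *\<^sub>R \<theta> + t *\<^sub>R perp \<theta>))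
      = integral {(-T + c) - c..(T + c) - c} (\<lambda>t. g (t + c))"
    by (simp add: pt g_def)
  also have "\<dots> = integral {-T + c..T + c} g"
    by (rule integral_shift_real_ivl)
  also have "\<dots> = integral {-r..r} g"
    by (rule supp_integral_eq[OF gc g0]) (use assms cx in auto)
  also have "\<dots> = radon f \<theta> v"
    using radon_int(2)[OF n(2) order_refl] by (simp add: g_def)
  finally show ?thesis by (simp add: \<theta>_def)
qed

lemma radon_deriv:
  assumes "r + norm x \<le> T"
  shows "((\<lambda>v. radon f (om \<phi>) v) has_vector_derivative
     integral {-T..T} (\<lambda>t. Df (x + (v - x \<bullet> om \<phi>) *\<^sub>R om \<phi> + t *\<^sub>R perp (om \<phi>)) (om \<phi>))) (at v)"
proof -
  define \<theta> where "\<theta> = om \<phi>"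
  have eq: "(\<lambda>v. radon f (om \<phi>) v) =
    (\<lambda>v. integral (cbox (-T) T) (\<lambda>t. f (x + (v - x \<bullet> \<theta>) *\<^sub>R \<theta> + t *\<^sub>R perp \<theta>)))"
    using radon_shift[OF assms] by (simp add: \<theta>_def)
  have pt: "x + (v - x \<bullet> \<theta>) *\<^sub>R \<theta> + t *\<^sub>R perp \<theta> = (x - (x \<bullet> \<theta>) *\<^sub>R \<theta> + t *\<^sub>R perp \<theta>) + v *\<^sub>R \<theta>"
    for v t by (simp add: algebra_simps)
  have "((\<lambda>v. integral (cbox (-T) T) (\<lambda>t. f (x + (v - x \<bullet> \<theta>) *\<^sub>R \<theta> + t *\<^sub>R perp \<theta>)))
      has_vector_derivative integral (cbox (-T) T) (\<lambda>t. Df (x + (v - x \<bullet> \<theta>) *\<^sub>R \<theta> + t *\<^sub>R perp \<theta>) \<theta>)) (at v within UNIV)"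
  proof (rule leibniz_rule_vector_derivative)
    fix v t
    show "((\<lambda>v. f (x + (v - x \<bullet> \<theta>) *\<^sub>R \<theta> + t *\<^sub>R perp \<theta>)) has_vector_derivative
        Df (x + (v - x \<bullet> \<theta>) *\<^sub>R \<theta> + t *\<^sub>R perp \<theta>) \<theta>) (at v within UNIV)"
      unfolding pt by (rule ray_deriv)
  next
    fix v show "(\<lambda>t. f (x + (v - x \<bullet> \<theta>) *\<^sub>R \<theta> + t *\<^sub>R perp \<theta>)) integrable_on cbox (- T) T"
      by (rule integrable_continuous) (intro continuous_intros)
  next
    show "continuous_on (UNIV \<times> cbox (- T) T)
     (\<lambda>(v, t). blinfun_apply (Df (x + (v - x \<bullet> \<theta>) *\<^sub>R \<theta> + t *\<^sub>R perp \<theta>)) \<theta>)"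
      by (simp add: split_beta) (intro continuous_intros)
  qed auto
  then show ?thesis unfolding eq by (simp add: \<theta>_def)
qed

end


definition e1 :: "real^2" where "e1 = vector [1, 0]"
definition e2 :: "real^2" where "e2 = vector [0, 1]"

lemma om_alt: "om a = cos a *\<^sub>R e1 + sin a *\<^sub>R e2"
  by (simp add: vec2_eq e1_def e2_def)

lemma om_cont[continuous_intros]: fixes a :: "'c::t2_space \<Rightarrow> real" assumes "continuous_on S a" shows "continuous_on S (\<lambda>z. om (a z))"
  unfolding om_alt using continuous_on_cos[OF assms] continuous_on_sin[OF assms] by (intro continuous_intros assms)

lemma perp_om_cont[continuous_intros]: fixes a :: "'c::t2_space \<Rightarrow> real" assumes "continuous_on S a" shows "continuous_on S (\<lambda>z. perp (om (a z)))"
  unfolding perp_om by (intro om_cont continuous_intros assms)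

lemma has_integral_superset2:
  fixes g :: "'n::euclidean_space \<Rightarrow> 'b::banach"
  assumes "(g has_integral i) S" "S \<subseteq> T" "\<And>y. y \<in> T - S \<Longrightarrow> g y = 0"
  shows "(g has_integral i) T"
proof -
  have "((\<lambda>y. if y \<in> S then g y else 0) has_integral i) T"
    by (subst has_integral_restrict[OF assms(2)]) (rule assms(1))
  then show ?thesis
    by (rule has_integral_cong[THEN iffD1, rotated]) (use assms(3) in auto)
qed

locale c2c_pt = c2c +
  fixes x :: "real^2"
begin

definition TT where "TT = r + norm x"
definition A where "A \<phi> s t = Df (x + s *\<^sub>R om \<phi> + t *\<^sub>R perp (om \<phi>)) (om \<phi>)"
definition K where "K \<phi> s t = - integral {-1..1}
   (\<lambda>\<sigma>. D2 (x + (\<sigma> * s) *\<^sub>R om \<phi> + t *\<^sub>R perp (om \<phi>)) (om \<phi>) (om \<phi>))"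
definition gd where "gd \<phi> u = integral {-TT..TT} (A \<phi> u)"
definition P where "P \<phi> s = integral {-TT..TT} (K \<phi> s)"

lemma TT_pos: "0 < TT" using r_pos by (simp add: TT_def add_pos_nonneg)

lemma far_n:
  assumes "TT \<le> \<bar>t\<bar>"
  shows "r \<le> \<bar>(x + s *\<^sub>R om \<phi> + t *\<^sub>R perp (om \<phi>)) \<bullet> perp (om \<phi>)\<bar>"
proof -
  have "\<bar>x \<bullet> perp (om \<phi>)\<bar> \<le> norm x" by (rule abs_inner_unit_le) simp
  moreover have "perp (om \<phi>) \<bullet> perp (om \<phi>) = 1" by (simp add: norm_eq_1[symmetric])
  ultimately show ?thesis using assms by (simp add: inner_add_left TT_def)
qed

lemma far_t:
  assumes "TT \<le> \<bar>s\<bar>"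
  shows "r \<le> \<bar>(x + s *\<^sub>R om \<phi> + t *\<^sub>R perp (om \<phi>)) \<bullet> om \<phi>\<bar>"
proof -
  have "\<bar>x \<bullet> om \<phi>\<bar> \<le> norm x" by (rule abs_inner_unit_le) simp
  moreover have "om \<phi> \<bullet> om \<phi> = 1" by (simp add: norm_eq_1[symmetric])
  moreover have "perp (om \<phi>) \<bullet> om \<phi> = 0" by simp
  ultimately show ?thesis using assms by (simp add: inner_add_left TT_def)
qed

lemma A_zero_t: "TT \<le> \<bar>t\<bar> \<Longrightarrow> A \<phi> s t = 0"
  unfolding A_def using supp_e(2)[OF _ far_n] by simp

lemma A_zero_s: "TT \<le> \<bar>s\<bar> \<Longrightarrow> A \<phi> s t = 0"
  unfolding A_def using supp_e(2)[OF _ far_t] by simp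

lemma K_zero_t: "TT \<le> \<bar>t\<bar> \<Longrightarrow> K \<phi> s t = 0"
proof -
  assume a: "TT \<le> \<bar>t\<bar>"
  have "D2 (x + (\<sigma> * s) *\<^sub>R om \<phi> + t *\<^sub>R perp (om \<phi>)) = 0" for \<sigma>
    using supp_e(3)[OF _ far_n[OF a]] by simp
  then show ?thesis by (simp add: K_def)
qed

lemma A_cont[continuous_intros]:
  fixes a :: "'c::t2_space \<Rightarrow> real"
  assumes "continuous_on S a" "continuous_on S b" "continuous_on S c"
  shows "continuous_on S (\<lambda>z. A (a z) (b z) (c z))"
  unfolding A_def by (intro continuous_intros assms)

lemma K_cont0: "continuous_on UNIV (\<lambda>(\<phi>, s, t). K \<phi> s t)"
proof -
  have "continuous_on UNIV (\<lambda>z::real\<times>real\<times>real. integral (cbox (-1) 1)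
     (\<lambda>\<sigma>. D2 (x + (\<sigma> * fst (snd z)) *\<^sub>R om (fst z) + snd (snd z) *\<^sub>R perp (om (fst z))) (om (fst z)) (om (fst z))))"
    by (rule integral_continuous_on_param) (simp add: split_beta, intro continuous_intros)
  then have "continuous_on UNIV (\<lambda>z::real\<times>real\<times>real. - integral (cbox (-1) 1)
     (\<lambda>\<sigma>. D2 (x + (\<sigma> * fst (snd z)) *\<^sub>R om (fst z) + snd (snd z) *\<^sub>R perp (om (fst z))) (om (fst z)) (om (fst z))))"
    by (intro continuous_intros)
  then show ?thesis by (simp add: K_def split_beta)
qed

lemma K_cont[continuous_intros]:
  fixes a :: "'c::t2_space \<Rightarrow> real"
  assumes "continuous_on S a" "continuous_on S b" "continuous_on S c"
  shows "continuous_on S (\<lambda>z. K (a z) (b z) (c z))"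
proof -
  have "continuous_on S (\<lambda>z. (a z, b z, c z))" by (intro continuous_intros assms)
  from continuous_on_compose2[OF K_cont0 this] show ?thesis by simp
qed

lemma K_id: "s *\<^sub>R K \<phi> s t = A \<phi> (-s) t - A \<phi> s t"
proof -
  define a where "a = x + t *\<^sub>R perp (om \<phi>)"
  have pt: "x + (\<sigma> * s) *\<^sub>R om \<phi> + t *\<^sub>R perp (om \<phi>) = a + \<sigma> *\<^sub>R (s *\<^sub>R om \<phi>)" for \<sigma>
    by (simp add: a_def algebra_simps)
  have "((\<lambda>\<sigma>. blinfun_apply (blinfun_apply (D2 (a + \<sigma> *\<^sub>R (s *\<^sub>R om \<phi>))) (s *\<^sub>R om \<phi>)) (om \<phi>))
      has_integral (Df (a + 1 *\<^sub>R (s *\<^sub>R om \<phi>)) (om \<phi>) - Df (a + (-1) *\<^sub>R (s *\<^sub>R om \<phi>)) (om \<phi>))) {-1..1}"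
    using fundamental_theorem_of_calculus[of "-1" 1 "\<lambda>\<sigma>. Df (a + \<sigma> *\<^sub>R (s *\<^sub>R om \<phi>)) (om \<phi>)", OF _ ray_deriv_D]
    by simp
  then have "((\<lambda>\<sigma>. s *\<^sub>R D2 (x + (\<sigma> * s) *\<^sub>R om \<phi> + t *\<^sub>R perp (om \<phi>)) (om \<phi>) (om \<phi>))
      has_integral (A \<phi> s t - A \<phi> (-s) t)) {-1..1}"
    by (simp add: pt A_def a_def blinfun.scaleR_left blinfun.scaleR_right algebra_simps)
  then have "integral {-1..1} (\<lambda>\<sigma>. s *\<^sub>R D2 (x + (\<sigma> * s) *\<^sub>R om \<phi> + t *\<^sub>R perp (om \<phi>)) (om \<phi>) (om \<phi>))
     = A \<phi> s t - A \<phi> (-s) t"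
    by (rule integral_unique)
  then have "s *\<^sub>R integral {-1..1} (\<lambda>\<sigma>. D2 (x + (\<sigma> * s) *\<^sub>R om \<phi> + t *\<^sub>R perp (om \<phi>)) (om \<phi>) (om \<phi>))
     = A \<phi> s t - A \<phi> (-s) t"
    by (simp add: integral_scaleR_right)
  then show ?thesis by (simp add: K_def)
qed

lemma gd_cont[continuous_intros]:
  fixes a :: "'c::t2_space \<Rightarrow> real"
  assumes a: "continuous_on S a" "continuous_on S b"
  shows "continuous_on S (\<lambda>z. gd (a z) (b z))"
proof -
  have "continuous_on (UNIV::(real\<times>real) set) (\<lambda>z. integral (cbox (-TT) TT) (A (fst z) (snd z)))"
    by (rule integral_continuous_on_param) (simp add: split_beta, intro continuous_intros)
  from continuous_on_compose2[OF this, of S "\<lambda>z. (a z, b z)"] a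
  show ?thesis by (auto simp: gd_def intro!: continuous_intros)
qed

lemma P_cont[continuous_intros]:
  fixes a :: "'c::t2_space \<Rightarrow> real"
  assumes a: "continuous_on S a" "continuous_on S b"
  shows "continuous_on S (\<lambda>z. P (a z) (b z))"
proof -
  have "continuous_on (UNIV::(real\<times>real) set) (\<lambda>z. integral (cbox (-TT) TT) (K (fst z) (snd z)))"
    by (rule integral_continuous_on_param) (simp add: split_beta, intro continuous_intros)
  from continuous_on_compose2[OF this, of S "\<lambda>z. (a z, b z)"] a
  show ?thesis by (auto simp: P_def intro!: continuous_intros)
qed

lemma gd_zero: "TT \<le> \<bar>u\<bar> \<Longrightarrow> gd \<phi> u = 0"
proof -
  assume "TT \<le> \<bar>u\<bar>"
  then have "A \<phi> u = (\<lambda>t. 0)" by (intro ext A_zero_s)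
  then show ?thesis by (simp add: gd_def)
qed

lemma P_id: "s *\<^sub>R P \<phi> s = gd \<phi> (-s) - gd \<phi> s"
proof -
  have i: "(\<lambda>t. A \<phi> u t) integrable_on {-TT..TT}" for u
    by (rule integrable_continuous_real) (intro continuous_intros)
  have "s *\<^sub>R P \<phi> s = integral {-TT..TT} (\<lambda>t. s *\<^sub>R K \<phi> s t)" by (simp add: P_def integral_scaleR_right)
  also have "\<dots> = integral {-TT..TT} (\<lambda>t. A \<phi> (-s) t - A \<phi> s t)" by (simp add: K_id)
  also have "\<dots> = gd \<phi> (-s) - gd \<phi> s" unfolding gd_def by (rule integral_diff) (use i in auto)
  finally show ?thesis .
qed

lemma gd_deriv:
  "((\<lambda>v. radon f (om \<phi>) v) has_vector_derivative gd \<phi> (v - x \<bullet> om \<phi>)) (at v)"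
proof -
  have e: "A \<phi> u = (\<lambda>t. Df (x + u *\<^sub>R om \<phi> + t *\<^sub>R perp (om \<phi>)) (om \<phi>))" for u
    by (rule ext) (simp add: A_def)
  show ?thesis using radon_deriv[of x TT \<phi> v] by (simp add: TT_def gd_def e)
qed

lemma vd_eq: "vector_derivative (\<lambda>v. radon f (om \<phi>) v) (at v) = gd \<phi> (v - x \<bullet> om \<phi>)"
  by (rule vector_derivative_at[OF gd_deriv])

end


context c2c_pt begin

lemma hilb_int:
  assumes e: "0 < \<epsilon>" "\<epsilon> \<le> TT"
  shows "integral {s. \<epsilon> \<le> \<bar>x \<bullet> om \<phi> - s\<bar>}
     (\<lambda>s. (1 / (x \<bullet> om \<phi> - s)) *\<^sub>R vector_derivative (\<lambda>u. radon f (om \<phi>) u) (at s))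
   = integral {\<epsilon>..TT} (P \<phi>)"
proof -
  define t0 where "t0 = x \<bullet> om \<phi>"
  define h where "h = (\<lambda>s. (1 / (t0 - s)) *\<^sub>R gd \<phi> (s - t0))"
  have heq: "(\<lambda>s. (1 / (x \<bullet> om \<phi> - s)) *\<^sub>R vector_derivative (\<lambda>u. radon f (om \<phi>) u) (at s)) = h"
    by (rule ext) (simp add: vd_eq h_def t0_def)
  define J1 where "J1 = integral {\<epsilon>..TT} (\<lambda>u. (1 / (- u)) *\<^sub>R gd \<phi> u)"
  define J2 where "J2 = integral {\<epsilon>..TT} (\<lambda>u. (1 / u) *\<^sub>R gd \<phi> (- u))"
  have c1: "continuous_on {\<epsilon>..TT} (\<lambda>u. (1 / (- u)) *\<^sub>R gd \<phi> u)"
    using e by (intro continuous_intros) auto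
  have c2: "continuous_on {\<epsilon>..TT} (\<lambda>u. (1 / u) *\<^sub>R gd \<phi> (- u))"
    using e by (intro continuous_intros) auto
  have i1: "((\<lambda>u. (1 / (- u)) *\<^sub>R gd \<phi> u) has_integral J1) {\<epsilon>..TT}"
    unfolding J1_def by (rule integrable_integral, rule integrable_continuous_real, rule c1)
  have i2: "((\<lambda>u. (1 / u) *\<^sub>R gd \<phi> (- u)) has_integral J2) {\<epsilon>..TT}"
    unfolding J2_def by (rule integrable_integral, rule integrable_continuous_real, rule c2)
  have "((h \<circ> (+) t0) has_integral J1) {\<epsilon>..TT}"
    using i1 by (simp add: h_def o_def)
  then have h1: "(h has_integral J1) {\<epsilon> + t0..TT + t0}"
    by (simp add: has_integral_shift_Icc_real)
  have "((\<lambda>u. (h \<circ> (+) t0) (- u)) has_integral J2) {\<epsilon>..TT}"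
    using i2 by (simp add: h_def o_def)
  then have "((h \<circ> (+) t0) has_integral J2) {-TT..-\<epsilon>}"
    by (simp add: has_integral_reflect_real[symmetric, where f="h \<circ> (+) t0"])
  then have h2: "(h has_integral J2) {-TT + t0..-\<epsilon> + t0}"
    by (simp add: has_integral_shift_Icc_real)
  have "(h has_integral J1 + J2) ({\<epsilon> + t0..TT + t0} \<union> {-TT + t0..-\<epsilon> + t0})"
    by (rule has_integral_Un[OF h1 h2]) (rule negligible_subset[of "{}"], use e in auto)
  then have "(h has_integral J1 + J2) {s. \<epsilon> \<le> \<bar>t0 - s\<bar>}"
  proof (rule has_integral_superset2)
    show "{\<epsilon> + t0..TT + t0} \<union> {- TT + t0..- \<epsilon> + t0} \<subseteq> {s. \<epsilon> \<le> \<bar>t0 - s\<bar>}" by auto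
    fix y assume "y \<in> {s. \<epsilon> \<le> \<bar>t0 - s\<bar>} - ({\<epsilon> + t0..TT + t0} \<union> {- TT + t0..- \<epsilon> + t0})"
    then have "TT \<le> \<bar>y - t0\<bar>" by auto
    then show "h y = 0" by (simp add: h_def gd_zero)
  qed
  then have "integral {s. \<epsilon> \<le> \<bar>t0 - s\<bar>} h = J1 + J2" by (rule integral_unique)
  also have "J1 + J2 = integral {\<epsilon>..TT} (P \<phi>)"
  proof -
    have "((\<lambda>u. (1 / (- u)) *\<^sub>R gd \<phi> u + (1 / u) *\<^sub>R gd \<phi> (- u)) has_integral J1 + J2) {\<epsilon>..TT}"
      by (rule has_integral_add[OF i1 i2])
    moreover have eqf: "(1 / (- u)) *\<^sub>R gd \<phi> u + (1 / u) *\<^sub>R gd \<phi> (- u) = P \<phi> u" if "u \<in> {\<epsilon>..TT}" for u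
    proof -
      have "u \<noteq> 0" using that e by auto
      then have "P \<phi> u = (1 / u) *\<^sub>R (u *\<^sub>R P \<phi> u)" by simp
      also have "\<dots> = (1 / u) *\<^sub>R (gd \<phi> (-u) - gd \<phi> u)" by (simp add: P_id)
      finally show ?thesis by (simp add: algebra_simps)
    qed
    ultimately have "(P \<phi> has_integral J1 + J2) {\<epsilon>..TT}"
      using has_integral_cong[of "{\<epsilon>..TT}" "\<lambda>u. (1 / (- u)) *\<^sub>R gd \<phi> u + (1 / u) *\<^sub>R gd \<phi> (- u)" "P \<phi>" "J1 + J2"] eqf
      by blast
    then show ?thesis by (simp add: integral_unique)
  qed
  finally show ?thesis by (simp add: heq t0_def)
qed

lemma hilbert_val:
  "hilbert (\<lambda>s. vector_derivative (\<lambda>u. radon f (om \<phi>) u) (at s)) (x \<bullet> om \<phi>)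
    = (1 / pi) *\<^sub>R integral {0..TT} (P \<phi>)"
proof -
  have c: "continuous_on {0..TT} (\<lambda>e. integral {e..TT} (P \<phi>))"
    by (rule indefinite_integral_continuous_1', rule integrable_continuous_real) (intro continuous_intros)
  have l: "((\<lambda>e. integral {e..TT} (P \<phi>)) \<longlongrightarrow> integral {0..TT} (P \<phi>)) (at_right 0)"
    using continuous_on_Icc_at_rightD[OF c TT_pos] by simp
  have ev: "eventually (\<lambda>e. integral {e..TT} (P \<phi>) = integral {s. e \<le> \<bar>x \<bullet> om \<phi> - s\<bar>}
     (\<lambda>s. (1 / (x \<bullet> om \<phi> - s)) *\<^sub>R vector_derivative (\<lambda>u. radon f (om \<phi>) u) (at s))) (at_right 0)"
    unfolding eventually_at_right_field
    by (rule exI[of _ TT]) (use TT_pos hilb_int in auto)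
  have "((\<lambda>e. integral {s. e \<le> \<bar>x \<bullet> om \<phi> - s\<bar>}
     (\<lambda>s. (1 / (x \<bullet> om \<phi> - s)) *\<^sub>R vector_derivative (\<lambda>u. radon f (om \<phi>) u) (at s)))
      \<longlongrightarrow> integral {0..TT} (P \<phi>)) (at_right 0)"
    by (rule tendsto_cong[THEN iffD1, OF ev l])
  then show ?thesis
    unfolding hilbert_def by (subst tendsto_Lim) auto
qed

end


lemma periodic_shift:
  fixes N :: "real \<Rightarrow> 'b::euclidean_space"
  assumes c: "continuous_on UNIV N" and p: "\<And>a. N (a + 2*pi) = N a"
    and cb: "-2*pi \<le> c" "c \<le> 2*pi"
  shows "integral {0..2*pi} (\<lambda>\<phi>. N (\<phi> + c)) = integral {0..2*pi} N"
proof -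
  have i: "N integrable_on {a..b}" for a b
    by (rule integrable_continuous_real, rule continuous_on_subset[OF c]) auto
  have "integral {0..2*pi} (\<lambda>\<phi>. N (\<phi> + c)) = integral {c - c..(2*pi + c) - c} (\<lambda>\<phi>. N (\<phi> + c))"
    by simp
  also have "\<dots> = integral {c..2*pi+c} N" by (rule integral_shift_real_ivl)
  also have "\<dots> = integral {0..2*pi} N"
  proof (cases "0 \<le> c")
    case True
    have "integral {c..2*pi+c} N = integral {c..2*pi} N + integral {2*pi..2*pi+c} N"
      by (rule Henstock_Kurzweil_Integration.integral_combine[symmetric]) (use True cb i in auto)
    also have "integral {2*pi..2*pi+c} N = integral {(0 + 2*pi) - 2*pi..(c + 2*pi) - 2*pi} (\<lambda>\<phi>. N (\<phi> + 2*pi))"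
      by (subst integral_shift_real_ivl) (simp add: add.commute)
    also have "\<dots> = integral {0..c} N" by (simp add: p)
    also have "integral {c..2*pi} N + integral {0..c} N = integral {0..2*pi} N"
      by (subst add.commute, rule Henstock_Kurzweil_Integration.integral_combine) (use True cb i in auto)
    finally show ?thesis .
  next
    case False
    have "integral {c..2*pi+c} N = integral {c..0} N + integral {0..2*pi+c} N"
      by (rule Henstock_Kurzweil_Integration.integral_combine[symmetric]) (use False cb i in auto)
    also have "integral {c..0} N = integral {(c + 2*pi) - 2*pi..(2*pi) - 2*pi} (\<lambda>\<phi>. N \<phi>)"
      by simp
    also have "\<dots> = integral {c + 2*pi..2*pi} (\<lambda>\<phi>. N (\<phi> - 2*pi))"
      using integral_shift_real_ivl[where f="\<lambda>\<phi>. N (\<phi> - 2*pi)" and a="c + 2*pi" and b="2*pi" and c="2*pi"] p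
      by (simp add: algebra_simps)
    also have "\<dots> = integral {c + 2*pi..2*pi} N"
      using p[of "\<phi> - 2*pi" for \<phi>] by simp
    also have "integral {c + 2*pi..2*pi} N + integral {0..2*pi+c} N = integral {0..2*pi} N"
    proof -
      have "integral {0..c + 2*pi} N + integral {c + 2*pi..2*pi} N = integral {0..2*pi} N"
        by (rule Henstock_Kurzweil_Integration.integral_combine) (use False cb i in auto)
      then show ?thesis by (metis add.commute)
    qed
    finally show ?thesis .
  qed
  finally show ?thesis .
qed

context c2c_pt begin

definition N where "N \<alpha> = integral {0..TT} (\<lambda>\<rho>. Df (x + \<rho> *\<^sub>R om \<alpha>) (perp (om \<alpha>)))"
definition Q where "Q \<phi> \<alpha> = integral {0..TT} (\<lambda>\<rho>. Df (x + \<rho> *\<^sub>R om \<alpha>) (om \<phi>))"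

lemma N_cont: "continuous_on UNIV N"
proof -
  have "continuous_on UNIV (\<lambda>\<alpha>. integral (cbox 0 TT) (\<lambda>\<rho>. Df (x + \<rho> *\<^sub>R om \<alpha>) (perp (om \<alpha>))))"
    by (rule integral_continuous_on_param) (simp add: split_beta, intro continuous_intros)
  then show ?thesis by (simp add: N_def[abs_def])
qed

lemma N_periodic: "N (a + 2*pi) = N a"
  by (simp add: N_def om_periodic)

lemma far_ray: "TT \<le> \<rho> \<Longrightarrow> r \<le> \<bar>(x + \<rho> *\<^sub>R om \<alpha>) \<bullet> om \<alpha>\<bar>"
proof -
  assume a: "TT \<le> \<rho>"
  have "\<bar>x \<bullet> om \<alpha>\<bar> \<le> norm x" by (rule abs_inner_unit_le) simp
  moreover have "om \<alpha> \<bullet> om \<alpha> = 1" by (simp add: norm_eq_1[symmetric])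
  ultimately show ?thesis using a by (simp add: inner_add_left TT_def)
qed

lemma ray_int: "integral {0..TT} (\<lambda>\<rho>. Df (x + \<rho> *\<^sub>R om \<alpha>) (om \<alpha>)) = - f x"
proof -
  have "((\<lambda>\<rho>. Df (x + \<rho> *\<^sub>R om \<alpha>) (om \<alpha>)) has_integral
     (f (x + TT *\<^sub>R om \<alpha>) - f (x + 0 *\<^sub>R om \<alpha>))) {0..TT}"
    by (rule fundamental_theorem_of_calculus) (use TT_pos ray_deriv in auto)
  moreover have "f (x + TT *\<^sub>R om \<alpha>) = 0" using supp_e(1)[OF _ far_ray] by simp
  ultimately show ?thesis by (simp add: integral_unique)
qed

lemma Q_formula: "Q \<phi> \<alpha> = - cos (\<phi> - \<alpha>) *\<^sub>R f x + sin (\<phi> - \<alpha>) *\<^sub>R N \<alpha>"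
proof -
  have o: "om \<phi> = cos (\<phi> - \<alpha>) *\<^sub>R om \<alpha> + sin (\<phi> - \<alpha>) *\<^sub>R perp (om \<alpha>)"
    using om_add[of \<alpha> "\<phi> - \<alpha>"] by simp
  have i1: "(\<lambda>\<rho>. cos (\<phi> - \<alpha>) *\<^sub>R Df (x + \<rho> *\<^sub>R om \<alpha>) (om \<alpha>)) integrable_on {0..TT}"
    by (rule integrable_continuous_real) (intro continuous_intros)
  have i2: "(\<lambda>\<rho>. sin (\<phi> - \<alpha>) *\<^sub>R Df (x + \<rho> *\<^sub>R om \<alpha>) (perp (om \<alpha>))) integrable_on {0..TT}"
    by (rule integrable_continuous_real) (intro continuous_intros)
  have "Q \<phi> \<alpha> = integral {0..TT} (\<lambda>\<rho>. cos (\<phi> - \<alpha>) *\<^sub>R Df (x + \<rho> *\<^sub>R om \<alpha>) (om \<alpha>)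
      + sin (\<phi> - \<alpha>) *\<^sub>R Df (x + \<rho> *\<^sub>R om \<alpha>) (perp (om \<alpha>)))"
    unfolding Q_def by (subst o) (simp add: blinfun.add_right blinfun.scaleR_right)
  also have "\<dots> = cos (\<phi> - \<alpha>) *\<^sub>R integral {0..TT} (\<lambda>\<rho>. Df (x + \<rho> *\<^sub>R om \<alpha>) (om \<alpha>))
      + sin (\<phi> - \<alpha>) *\<^sub>R N \<alpha>"
    by (subst integral_add[OF i1 i2]) (simp add: N_def)
  finally show ?thesis by (simp add: ray_int)
qed

lemma subst_ray:
  assumes cb: "0 < cos \<beta>"
  shows "integral {0..TT} (\<lambda>s. Df (x + (s / cos \<beta>) *\<^sub>R om \<alpha>) (om \<phi>)) = cos \<beta> *\<^sub>R Q \<phi> \<alpha>"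
proof -
  have c1: "cos \<beta> \<le> 1" by simp
  have le: "TT \<le> TT / cos \<beta>" using cb c1 TT_pos by (simp add: le_divide_eq)
  have "((\<lambda>\<rho>. cos \<beta> *\<^sub>R Df (x + ((cos \<beta> * \<rho>) / cos \<beta>) *\<^sub>R om \<alpha>) (om \<phi>)) has_integral
      integral {cos \<beta> * 0..cos \<beta> * (TT / cos \<beta>)} (\<lambda>s. Df (x + (s / cos \<beta>) *\<^sub>R om \<alpha>) (om \<phi>))) {0..TT / cos \<beta>}"
  proof (rule has_integral_substitution[where c=0 and d=TT])
    show "0 \<le> TT / cos \<beta>" using le TT_pos by linarith
    show "cos \<beta> * 0 \<le> cos \<beta> * (TT / cos \<beta>)" using cb TT_pos by simp
    show "(*) (cos \<beta>) ` {0..TT / cos \<beta>} \<subseteq> {0..TT}" using cb by (auto simp: field_simps)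
    show "continuous_on {0..TT} (\<lambda>s. blinfun_apply (Df (x + (s / cos \<beta>) *\<^sub>R om \<alpha>)) (om \<phi>))"
      by (intro continuous_intros) (use cb in auto)
    show "((*) (cos \<beta>) has_real_derivative cos \<beta>) (at s within {0..TT / cos \<beta>})" for s
      by (auto intro!: derivative_eq_intros)
  qed
  then have "((\<lambda>\<rho>. cos \<beta> *\<^sub>R Df (x + \<rho> *\<^sub>R om \<alpha>) (om \<phi>)) has_integral
      integral {0..TT} (\<lambda>s. Df (x + (s / cos \<beta>) *\<^sub>R om \<alpha>) (om \<phi>))) {0..TT / cos \<beta>}"
    using cb by simp
  then have e0: "integral {0..TT / cos \<beta>} (\<lambda>\<rho>. cos \<beta> *\<^sub>R Df (x + \<rho> *\<^sub>R om \<alpha>) (om \<phi>)) =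
      integral {0..TT} (\<lambda>s. Df (x + (s / cos \<beta>) *\<^sub>R om \<alpha>) (om \<phi>))"
    by (rule integral_unique)
  have e1: "integral {0..TT} (\<lambda>s. Df (x + (s / cos \<beta>) *\<^sub>R om \<alpha>) (om \<phi>))
     = cos \<beta> *\<^sub>R integral {0..TT / cos \<beta>} (\<lambda>\<rho>. Df (x + \<rho> *\<^sub>R om \<alpha>) (om \<phi>))"
    unfolding e0[symmetric] by simp
  have i: "(\<lambda>\<rho>. Df (x + \<rho> *\<^sub>R om \<alpha>) (om \<phi>)) integrable_on {0..TT / cos \<beta>}"
    by (rule integrable_continuous_real) (intro continuous_intros)
  have "integral {0..TT / cos \<beta>} (\<lambda>\<rho>. Df (x + \<rho> *\<^sub>R om \<alpha>) (om \<phi>))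
      = integral {0..TT} (\<lambda>\<rho>. Df (x + \<rho> *\<^sub>R om \<alpha>) (om \<phi>)) + integral {TT..TT / cos \<beta>} (\<lambda>\<rho>. Df (x + \<rho> *\<^sub>R om \<alpha>) (om \<phi>))"
    by (rule Henstock_Kurzweil_Integration.integral_combine[symmetric]) (use le TT_pos i in auto)
  also have "integral {TT..TT / cos \<beta>} (\<lambda>\<rho>. Df (x + \<rho> *\<^sub>R om \<alpha>) (om \<phi>)) = integral {TT..TT / cos \<beta>} (\<lambda>\<rho>. 0)"
    by (rule integral_cong) (use supp_e(2)[OF _ far_ray] in auto)
  finally show ?thesis using e1 by (simp add: Q_def)
qed

end


lemma box_real: "cbox (a::real) b = {a..b}" by (rule cbox_interval)

lemma tan_comp_cont:
  assumes b: "b < pi/2" and g: "continuous_on S g" and im: "g ` S \<subseteq> {-b..b}"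
  shows "continuous_on S (\<lambda>z. tan (g z))"
proof -
  have "continuous_on {-b..b} (\<lambda>y::real. tan y)"
  proof (rule Transcendental.continuous_on_tan[OF continuous_on_id], intro ballI)
    fix y assume "y \<in> {-b..b}"
    then have "0 < cos y" using b by (intro cos_gt_zero_pi) auto
    then show "cos y \<noteq> 0" by simp
  qed
  from continuous_on_compose2[OF this g im] show ?thesis .
qed

context c2c_pt begin

lemma A_cone1:
  assumes cb: "0 < cos \<beta>"
  shows "A \<phi> s (s * tan \<beta>) = Df (x + (s / cos \<beta>) *\<^sub>R om (\<phi> + \<beta>)) (om \<phi>)"
proof -
  have "(s / cos \<beta>) *\<^sub>R om (\<phi> + \<beta>) = s *\<^sub>R om \<phi> + (s * tan \<beta>) *\<^sub>R perp (om \<phi>)"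
    using cb by (simp add: om_add scaleR_add_right tan_def)
  then show ?thesis by (simp add: A_def add.assoc)
qed

lemma A_cone2:
  assumes cb: "0 < cos \<beta>"
  shows "A \<phi> (-s) (s * tan \<beta>) = Df (x + (s / cos \<beta>) *\<^sub>R om (\<phi> + (pi - \<beta>))) (om \<phi>)"
proof -
  have "(s / cos \<beta>) *\<^sub>R om (\<phi> + (pi - \<beta>)) = (-s) *\<^sub>R om \<phi> + (s * tan \<beta>) *\<^sub>R perp (om \<phi>)"
    using cb by (simp add: vec2_eq tan_def cos_add sin_add cos_diff sin_diff field_simps)
  then have eq: "x + (-s) *\<^sub>R om \<phi> + (s * tan \<beta>) *\<^sub>R perp (om \<phi>) = x + (s / cos \<beta>) *\<^sub>R om (\<phi> + (pi - \<beta>))"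
    by (simp add: algebra_simps)
  show ?thesis by (simp only: A_def eq)
qed

definition G where "G \<phi> \<beta> = 2 *\<^sub>R f x - tan \<beta> *\<^sub>R (N (\<phi> + (pi - \<beta>)) - N (\<phi> + \<beta>))"

lemma inner_cone:
  assumes cb: "0 < cos \<beta>"
  shows "integral {0..TT} (\<lambda>s. (s * inverse ((cos \<beta>)\<^sup>2)) *\<^sub>R K \<phi> s (s * tan \<beta>)) = G \<phi> \<beta>"
proof -
  define c where "c = inverse ((cos \<beta>)\<^sup>2)"
  have i: "(\<lambda>s. Df (x + (s / cos \<beta>) *\<^sub>R om a) (om \<phi>)) integrable_on {0..TT}" for a
    by (rule integrable_continuous_real) (intro continuous_intros, use cb in auto)
  have "integral {0..TT} (\<lambda>s. (s * c) *\<^sub>R K \<phi> s (s * tan \<beta>))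
     = integral {0..TT} (\<lambda>s. c *\<^sub>R (Df (x + (s / cos \<beta>) *\<^sub>R om (\<phi> + (pi - \<beta>))) (om \<phi>)
            - Df (x + (s / cos \<beta>) *\<^sub>R om (\<phi> + \<beta>)) (om \<phi>)))"
  proof (rule integral_cong)
    fix s
    have "(s * c) *\<^sub>R K \<phi> s (s * tan \<beta>) = c *\<^sub>R (s *\<^sub>R K \<phi> s (s * tan \<beta>))" by simp
    also have "\<dots> = c *\<^sub>R (A \<phi> (-s) (s * tan \<beta>) - A \<phi> s (s * tan \<beta>))" by (simp add: K_id)
    finally show "(s * c) *\<^sub>R K \<phi> s (s * tan \<beta>) = c *\<^sub>R (Df (x + (s / cos \<beta>) *\<^sub>R om (\<phi> + (pi - \<beta>))) (om \<phi>)
            - Df (x + (s / cos \<beta>) *\<^sub>R om (\<phi> + \<beta>)) (om \<phi>))"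
      by (simp add: A_cone1[OF cb] A_cone2[OF cb])
  qed
  also have "\<dots> = c *\<^sub>R (integral {0..TT} (\<lambda>s. Df (x + (s / cos \<beta>) *\<^sub>R om (\<phi> + (pi - \<beta>))) (om \<phi>))
       - integral {0..TT} (\<lambda>s. Df (x + (s / cos \<beta>) *\<^sub>R om (\<phi> + \<beta>)) (om \<phi>)))"
    by (simp add: integral_diff[OF i i])
  also have "\<dots> = c *\<^sub>R (cos \<beta> *\<^sub>R Q \<phi> (\<phi> + (pi - \<beta>)) - cos \<beta> *\<^sub>R Q \<phi> (\<phi> + \<beta>))"
    by (simp add: subst_ray[OF cb])
  also have "\<dots> = c *\<^sub>R (cos \<beta> *\<^sub>R (cos \<beta> *\<^sub>R f x - sin \<beta> *\<^sub>R N (\<phi> + (pi - \<beta>)))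
        - cos \<beta> *\<^sub>R (- cos \<beta> *\<^sub>R f x - sin \<beta> *\<^sub>R N (\<phi> + \<beta>)))"
    by (simp add: Q_formula cos_diff sin_diff)
  also have "\<dots> = (c * cos \<beta> * cos \<beta>) *\<^sub>R f x + (c * cos \<beta> * cos \<beta>) *\<^sub>R f x
       - (c * cos \<beta> * sin \<beta>) *\<^sub>R (N (\<phi> + (pi - \<beta>)) - N (\<phi> + \<beta>))"
    by (simp add: algebra_simps)
  also have "c * cos \<beta> * cos \<beta> = 1" using cb by (simp add: c_def power2_eq_square field_simps)
  also have "c * cos \<beta> * sin \<beta> = tan \<beta>" using cb by (simp add: c_def power2_eq_square tan_def field_simps)
  finally show ?thesis by (simp add: G_def c_def scaleR_2)
qed

definition Cd where "Cd b \<phi> s = integral {-b..b} (\<lambda>\<beta>. (s * inverse ((cos \<beta>)\<^sup>2)) *\<^sub>R K \<phi> s (s * tan \<beta>))"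

lemma cos_pos_b: "b < pi/2 \<Longrightarrow> \<beta> \<in> {-b..b} \<Longrightarrow> 0 < cos \<beta>"
  by (rule cos_gt_zero_pi) auto

lemma Cd_swap:
  assumes b: "0 < b" "b < pi/2"
  shows "integral {0..TT} (Cd b \<phi>) = integral {-b..b} (G \<phi>)"
proof -
  have "integral (cbox 0 TT) (\<lambda>s. integral (cbox (-b) b) (\<lambda>\<beta>. (s * inverse ((cos \<beta>)\<^sup>2)) *\<^sub>R K \<phi> s (s * tan \<beta>)))
      = integral (cbox (-b) b) (\<lambda>\<beta>. integral (cbox 0 TT) (\<lambda>s. (s * inverse ((cos \<beta>)\<^sup>2)) *\<^sub>R K \<phi> s (s * tan \<beta>)))"
  proof (rule integral_swap_continuous)
    have "\<forall>z\<in>cbox (0, - b) (TT, b). cos (snd z) \<noteq> 0"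
      using cos_pos_b[OF b(2)] by (force simp: cbox_Pair_eq box_real)
    have "continuous_on (cbox (0, - b) (TT, b)) (\<lambda>z. tan (snd z))"
      by (rule tan_comp_cont[OF b(2)]) (auto intro!: continuous_intros simp: cbox_Pair_eq box_real)
    then show "continuous_on (cbox (0, - b) (TT, b)) (\<lambda>(s, \<beta>). (s * inverse ((cos \<beta>)\<^sup>2)) *\<^sub>R K \<phi> s (s * tan \<beta>))"
      using \<open>\<forall>z\<in>cbox (0, - b) (TT, b). cos (snd z) \<noteq> 0\<close>
      by (simp add: split_beta) (intro continuous_intros, auto)
  qed
  also have "\<dots> = integral {-b..b} (G \<phi>)"
    unfolding box_real
    by (rule integral_cong) (use inner_cone cos_pos_b[OF b(2)] in auto)
  finally show ?thesis by (simp add: Cd_def[abs_def] box_real)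
qed

lemma G_cont: "b < pi/2 \<Longrightarrow> continuous_on (UNIV \<times> {-b..b}) (\<lambda>(\<phi>, \<beta>). G \<phi> \<beta>)"
proof -
  assume b: "b < pi/2"
  have Nc[continuous_intros]: "continuous_on S (\<lambda>z. N (g z))" if "continuous_on S g" for S and g :: "real\<times>real \<Rightarrow> real"
    by (rule continuous_on_compose2[OF N_cont that]) auto
  have "\<forall>z\<in>UNIV \<times> {-b..b}. cos (snd z) \<noteq> 0"
    using cos_pos_b[OF b] by force
  have "continuous_on (UNIV \<times> {-b..b}) (\<lambda>z. tan (snd z))"
    by (rule tan_comp_cont[OF b]) (auto intro!: continuous_intros)
  then show ?thesis unfolding G_def split_beta by (intro continuous_intros) auto
qed

lemma G_outer:
  assumes b: "0 < b" "b < pi/2"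
  shows "integral {0..2*pi} (\<lambda>\<phi>. integral {-b..b} (G \<phi>)) = (2 * b * (4 * pi)) *\<^sub>R f x"
proof -
  have "integral (cbox 0 (2*pi)) (\<lambda>\<phi>. integral (cbox (-b) b) (G \<phi>))
     = integral (cbox (-b) b) (\<lambda>\<beta>. integral (cbox 0 (2*pi)) (\<lambda>\<phi>. G \<phi> \<beta>))"
    by (rule integral_swap_continuous)
       (rule continuous_on_subset[OF G_cont[OF b(2)]], auto simp: cbox_Pair_eq box_real)
  also have "\<dots> = integral {-b..b} (\<lambda>\<beta>. (4 * pi) *\<^sub>R f x)"
    unfolding box_real
  proof (rule integral_cong)
    fix \<beta> assume \<beta>: "\<beta> \<in> {-b..b}"
    have cb: "cos \<beta> \<noteq> 0" using cos_pos_b[OF b(2) \<beta>] by simp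
    have iN: "(\<lambda>\<phi>. N (\<phi> + c)) integrable_on {0..2*pi}" for c
      by (rule integrable_continuous_real, rule continuous_on_compose2[OF N_cont]) (auto intro!: continuous_intros)
    have p1: "integral {0..2*pi} (\<lambda>\<phi>. N (\<phi> + (pi - \<beta>))) = integral {0..2*pi} N"
      by (rule periodic_shift[OF N_cont N_periodic]) (use \<beta> b in auto)
    have p2: "integral {0..2*pi} (\<lambda>\<phi>. N (\<phi> + \<beta>)) = integral {0..2*pi} N"
      by (rule periodic_shift[OF N_cont N_periodic]) (use \<beta> b in auto)
    have iT: "(\<lambda>\<phi>. tan \<beta> *\<^sub>R (N (\<phi> + (pi - \<beta>)) - N (\<phi> + \<beta>))) integrable_on {0..2*pi}"
      by (rule integrable_continuous_real, intro continuous_intros;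
          rule continuous_on_compose2[OF N_cont]) (auto intro!: continuous_intros)
    have "integral {0..2*pi} (\<lambda>\<phi>. G \<phi> \<beta>) = integral {0..2*pi} (\<lambda>\<phi>. 2 *\<^sub>R f x)
       - integral {0..2*pi} (\<lambda>\<phi>. tan \<beta> *\<^sub>R (N (\<phi> + (pi - \<beta>)) - N (\<phi> + \<beta>)))"
      unfolding G_def by (rule integral_diff[OF _ iT]) (rule integrable_continuous_real, rule continuous_on_const)
    also have "integral {0..2*pi} (\<lambda>\<phi>. tan \<beta> *\<^sub>R (N (\<phi> + (pi - \<beta>)) - N (\<phi> + \<beta>)))
      = tan \<beta> *\<^sub>R (integral {0..2*pi} (\<lambda>\<phi>. N (\<phi> + (pi - \<beta>))) - integral {0..2*pi} (\<lambda>\<phi>. N (\<phi> + \<beta>)))"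
      by (simp add: integral_diff[OF iN iN])
    finally have "integral {0..2*pi} (\<lambda>\<phi>. G \<phi> \<beta>) = integral {0..2*pi} (\<lambda>\<phi>. 2 *\<^sub>R f x)
       - tan \<beta> *\<^sub>R (integral {0..2*pi} (\<lambda>\<phi>. N (\<phi> + (pi - \<beta>))) - integral {0..2*pi} (\<lambda>\<phi>. N (\<phi> + \<beta>)))" .
    then show "integral {0..2*pi} (\<lambda>\<phi>. G \<phi> \<beta>) = (4 * pi) *\<^sub>R f x"
      by (simp add: p1 p2)
  qed
  also have "\<dots> = (2 * b * (4 * pi)) *\<^sub>R f x" using b by simp
  finally show ?thesis by (simp add: box_real)
qed

end


context c2c_pt begin

lemma K_bound: obtains B where "0 \<le> B" "\<And>\<phi> s t. \<phi> \<in> {0..2*pi} \<Longrightarrow> s \<in> {0..TT} \<Longrightarrow> norm (K \<phi> s t) \<le> B"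
proof -
  define S where "S = {0..2*pi} \<times> {0..TT} \<times> {-TT..TT}"
  have cS: "compact S" unfolding S_def by (intro compact_Times compact_Icc)
  have "continuous_on S (\<lambda>(\<phi>, s, t). K \<phi> s t)"
    by (rule continuous_on_subset[OF K_cont0]) simp
  then have "compact ((\<lambda>(\<phi>, s, t). K \<phi> s t) ` S)"
    by (rule compact_continuous_image[OF _ cS])
  then have "bounded ((\<lambda>(\<phi>, s, t). K \<phi> s t) ` S)" by (rule compact_imp_bounded)
  then obtain B0 where B0: "\<And>y. y \<in> (\<lambda>(\<phi>, s, t). K \<phi> s t) ` S \<Longrightarrow> norm y \<le> B0"
    unfolding bounded_iff by blast
  show ?thesis
  proof (rule that[of "max B0 0"])
    fix \<phi> s t assume a: "\<phi> \<in> {0..2*pi}" "s \<in> {0..TT}"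
    show "norm (K \<phi> s t) \<le> max B0 0"
    proof (cases "t \<in> {-TT..TT}")
      case True
      then have "(\<phi>, s, t) \<in> S" using a by (simp add: S_def)
      then have "K \<phi> s t \<in> (\<lambda>(\<phi>, s, t). K \<phi> s t) ` S" by force
      then show ?thesis using B0 by fastforce
    next
      case False
      then have "TT \<le> \<bar>t\<bar>" by auto
      then show ?thesis by (simp add: K_zero_t)
    qed
  qed simp
qed

lemma Cd_cont:
  assumes b: "b < pi/2"
  shows "continuous_on UNIV (\<lambda>(\<phi>, s). Cd b \<phi> s)"
proof -
  have tc: "continuous_on (UNIV \<times> cbox (-b) b) (\<lambda>z. tan (snd z))"
    by (rule tan_comp_cont[OF b]) (auto intro!: continuous_intros simp: box_real)
  have "\<forall>z\<in>UNIV \<times> cbox (-b) b. cos (snd z) \<noteq> 0"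
    using cos_pos_b[OF b] by (force simp: box_real)
  then have "continuous_on (UNIV \<times> cbox (-b) b)
     (\<lambda>(z::real\<times>real, \<beta>). (snd z * inverse ((cos \<beta>)\<^sup>2)) *\<^sub>R K (fst z) (snd z) (snd z * tan \<beta>))"
    using tc by (simp add: split_beta) (intro continuous_intros, auto)
  then have "continuous_on UNIV (\<lambda>z::real\<times>real. integral (cbox (-b) b)
     (\<lambda>\<beta>. (snd z * inverse ((cos \<beta>)\<^sup>2)) *\<^sub>R K (fst z) (snd z) (snd z * tan \<beta>)))"
    by (rule integral_continuous_on_param)
  then show ?thesis by (simp add: Cd_def split_beta box_real)
qed

lemma Cd_eq_t:
  assumes b: "0 < b" "b < pi/2" and s: "0 \<le> s"
  shows "Cd b \<phi> s = integral {-(s * tan b)..s * tan b} (K \<phi> s)"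
proof -
  have tb: "0 < tan b" using b by (simp add: tan_gt_zero)
  have "((\<lambda>\<beta>. (s * inverse ((cos \<beta>)\<^sup>2)) *\<^sub>R K \<phi> s (s * tan \<beta>)) has_integral
      integral {s * tan (-b)..s * tan b} (K \<phi> s)) {-b..b}"
  proof (rule has_integral_substitution[where c="-(s * tan b)" and d="s * tan b"])
    show "- b \<le> b" using b by simp
    show "s * tan (- b) \<le> s * tan b" using s tb by (simp add: tan_minus)
    show "(\<lambda>\<beta>. s * tan \<beta>) ` {- b..b} \<subseteq> {- (s * tan b)..s * tan b}"
    proof safe
      fix \<beta> assume \<beta>: "\<beta> \<in> {-b..b}"
      have t1: "tan \<beta> \<le> tan b" using \<beta> b by (intro tan_mono_le) auto
      have t2: "tan (-b) \<le> tan \<beta>" using \<beta> b by (intro tan_mono_le) auto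
      have "s * tan \<beta> \<le> s * tan b" by (rule mult_left_mono[OF t1 s])
      moreover have "s * tan (-b) \<le> s * tan \<beta>" by (rule mult_left_mono[OF t2 s])
      ultimately show "s * tan \<beta> \<in> {- (s * tan b)..s * tan b}" by simp
    qed
    show "continuous_on {- (s * tan b)..s * tan b} (K \<phi> s)"
      by (rule continuous_on_subset[of UNIV]) (intro continuous_intros, auto)
    fix \<beta> assume \<beta>: "\<beta> \<in> {-b..b}"
    have "cos \<beta> \<noteq> 0" using cos_pos_b[OF b(2) \<beta>] by simp
    then have d: "DERIV tan \<beta> :> inverse ((cos \<beta>)\<^sup>2)" by (rule DERIV_tan)
    show "((\<lambda>\<beta>. s * tan \<beta>) has_real_derivative s * inverse ((cos \<beta>)\<^sup>2)) (at \<beta> within {- b..b})"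
      by (rule has_field_derivative_at_within[OF DERIV_cmult[OF d]])
  qed
  then show ?thesis by (simp add: Cd_def integral_unique tan_minus)
qed

lemma diff_bound:
  assumes d: "0 < \<delta>" "\<delta> \<le> pi/4" and B: "0 \<le> B"
    "\<And>\<phi> s t. \<phi> \<in> {0..2*pi} \<Longrightarrow> s \<in> {0..TT} \<Longrightarrow> norm (K \<phi> s t) \<le> B"
    and \<phi>: "\<phi> \<in> {0..2*pi}" and s: "s \<in> {0..TT}"
  shows "norm (P \<phi> s - Cd (pi/2 - \<delta>) \<phi> s) \<le> 4 * TT * B"
    and "TT * tan \<delta> \<le> s \<Longrightarrow> P \<phi> s = Cd (pi/2 - \<delta>) \<phi> s"
proof -
  define b where "b = pi/2 - \<delta>"
  have b: "0 < b" "b < pi/2" using d by (auto simp: b_def)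
  have td: "0 < tan \<delta>" using d by (intro tan_gt_zero) auto
  have tb: "tan b = inverse (tan \<delta>)" by (simp add: b_def tan_cot)
  define c where "c = s * tan b"
  have c0: "0 \<le> c" using s td by (simp add: c_def tb)
  have Cd: "Cd b \<phi> s = integral {-c..c} (K \<phi> s)" using Cd_eq_t[OF b] s by (simp add: c_def)
  have Kc: "continuous_on UNIV (K \<phi> s)" by (intro continuous_intros)
  have big: "P \<phi> s = Cd b \<phi> s" if "TT \<le> c"
    unfolding Cd P_def
    by (rule supp_integral_eq[OF Kc, symmetric]) (use that in \<open>auto simp: K_zero_t\<close>)
  show "TT * tan \<delta> \<le> s \<Longrightarrow> P \<phi> s = Cd (pi/2 - \<delta>) \<phi> s"
  proof -
    assume "TT * tan \<delta> \<le> s"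
    then have "TT \<le> c" using td by (simp add: c_def tb field_simps)
    then show ?thesis using big by (simp add: b_def)
  qed
  have bnd: "norm (integral {-a..a} (K \<phi> s)) \<le> B * (2 * a)" if "0 \<le> a" for a
  proof -
    have hi: "(K \<phi> s has_integral integral {-a..a} (K \<phi> s)) (cbox (-a) a)"
      unfolding box_real
      by (rule integrable_integral, rule integrable_continuous_real, rule continuous_on_subset[OF Kc]) simp
    have bd: "\<And>t. t \<in> cbox (-a) a \<Longrightarrow> norm (K \<phi> s t) \<le> B" using B(2) \<phi> s by blast
    from has_integral_bound[OF B(1) hi bd] show ?thesis using that by (simp add: box_real)
  qed
  show "norm (P \<phi> s - Cd (pi/2 - \<delta>) \<phi> s) \<le> 4 * TT * B"
  proof (cases "TT \<le> c")
    case True then show ?thesis using big B TT_pos by (simp add: b_def)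
  next
    case False
    have "norm (P \<phi> s - Cd b \<phi> s) \<le> norm (P \<phi> s) + norm (Cd b \<phi> s)" by (rule norm_triangle_ineq4)
    also have "\<dots> \<le> B * (2 * TT) + B * (2 * c)"
      using bnd[of TT] bnd[OF c0] TT_pos by (simp add: P_def Cd) 
    also have "\<dots> \<le> 4 * TT * B" using False B by (simp add: algebra_simps mult_left_mono)
    finally show ?thesis by (simp add: b_def)
  qed
qed

end


context c2c_pt begin

lemma Cd_cont'[continuous_intros]:
  fixes a :: "'c::t2_space \<Rightarrow> real"
  assumes b: "b < pi/2" and a: "continuous_on S a" "continuous_on S c"
  shows "continuous_on S (\<lambda>z. Cd b (a z) (c z))"
proof -
  have "continuous_on S (\<lambda>z. (a z, c z))" by (intro continuous_intros a)
  from continuous_on_compose2[OF Cd_cont[OF b] this] show ?thesis by simp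
qed

lemma int_diff_bound:
  assumes d: "0 < \<delta>" "\<delta> \<le> pi/4" and B: "0 \<le> B"
    "\<And>\<phi> s t. \<phi> \<in> {0..2*pi} \<Longrightarrow> s \<in> {0..TT} \<Longrightarrow> norm (K \<phi> s t) \<le> B"
    and \<phi>: "\<phi> \<in> {0..2*pi}"
  shows "norm (integral {0..TT} (P \<phi>) - integral {0..TT} (Cd (pi/2 - \<delta>) \<phi>)) \<le> 4 * TT * B * (TT * tan \<delta>)"
proof -
  define b where "b = pi/2 - \<delta>"
  have b: "b < pi/2" using d by (simp add: b_def)
  define e where "e = TT * tan \<delta>"
  have td: "0 < tan \<delta>" using d by (intro tan_gt_zero) auto
  have "tan \<delta> \<le> tan (pi/4)" using d by (intro tan_mono_le) auto
  then have td1: "tan \<delta> \<le> 1" by (simp add: tan_45)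
  have e: "0 \<le> e" "e \<le> TT" using td td1 TT_pos by (auto simp: e_def mult_left_le)
  define D where "D = (\<lambda>s. P \<phi> s - Cd b \<phi> s)"
  have Dc: "continuous_on UNIV D" unfolding D_def by (intro continuous_intros b)
  have iD: "D integrable_on {u..v}" for u v
    by (rule integrable_continuous_real, rule continuous_on_subset[OF Dc]) auto
  have "integral {0..TT} (P \<phi>) - integral {0..TT} (Cd b \<phi>) = integral {0..TT} D"
    unfolding D_def
    by (rule integral_diff[symmetric]; rule integrable_continuous_real) (intro continuous_intros b)+
  also have "\<dots> = integral {0..e} D + integral {e..TT} D"
    by (rule Henstock_Kurzweil_Integration.integral_combine[symmetric]) (use e iD in auto)
  also have "integral {e..TT} D = integral {e..TT} (\<lambda>s. 0)"
  proof (rule integral_cong)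
    fix s assume "s \<in> {e..TT}"
    then show "D s = 0" using diff_bound(2)[OF d B \<phi>, of s] e by (auto simp: D_def b_def e_def)
  qed
  finally have eq: "integral {0..TT} (P \<phi>) - integral {0..TT} (Cd b \<phi>) = integral {0..e} D" by simp
  have hi: "(D has_integral integral {0..e} D) (cbox 0 e)"
    unfolding box_real by (rule integrable_integral[OF iD])
  have bd: "\<And>s. s \<in> cbox 0 e \<Longrightarrow> norm (D s) \<le> 4 * TT * B"
    using diff_bound(1)[OF d B \<phi>] e unfolding D_def b_def box_real by auto
  have "norm (integral {0..e} D) \<le> 4 * TT * B * e"
    using has_integral_bound[OF _ hi bd] B e by (simp add: box_real)
  then show ?thesis using eq by (simp add: b_def e_def)
qed

lemma P_int_cont: "continuous_on UNIV (\<lambda>\<phi>. integral {0..TT} (P \<phi>))"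
proof -
  have "continuous_on UNIV (\<lambda>\<phi>. integral (cbox 0 TT) (P \<phi>))"
    by (rule integral_continuous_on_param) (simp add: split_beta, intro continuous_intros)
  then show ?thesis by (simp add: box_real)
qed

lemma Cd_int_cont: "b < pi/2 \<Longrightarrow> continuous_on UNIV (\<lambda>\<phi>. integral {0..TT} (Cd b \<phi>))"
proof -
  assume b: "b < pi/2"
  have "continuous_on UNIV (\<lambda>\<phi>. integral (cbox 0 TT) (Cd b \<phi>))"
    by (rule integral_continuous_on_param) (simp add: split_beta, intro continuous_intros b)
  then show ?thesis by (simp add: box_real)
qed

lemma main_identity: "integral {0..2*pi} (\<lambda>\<phi>. integral {0..TT} (P \<phi>)) = (4 * pi^2) *\<^sub>R f x"
proof -
  define I where "I = integral {0..2*pi} (\<lambda>\<phi>. integral {0..TT} (P \<phi>))"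
  obtain B where B: "0 \<le> B" "\<And>\<phi> s t. \<phi> \<in> {0..2*pi} \<Longrightarrow> s \<in> {0..TT} \<Longrightarrow> norm (K \<phi> s t) \<le> B"
    using K_bound by blast
  define C where "C = 4 * TT * B * TT * (2 * pi)"
  have bound: "norm (I - (2 * (pi/2 - \<delta>) * (4 * pi)) *\<^sub>R f x) \<le> C * tan \<delta>"
    if d: "0 < \<delta>" "\<delta> \<le> pi/4" for \<delta>
  proof -
    define b where "b = pi/2 - \<delta>"
    have b: "0 < b" "b < pi/2" using d by (auto simp: b_def)
    have iP: "(\<lambda>\<phi>. integral {0..TT} (P \<phi>)) integrable_on {0..2*pi}"
      by (rule integrable_continuous_real, rule continuous_on_subset[OF P_int_cont]) auto
    have iC: "(\<lambda>\<phi>. integral {0..TT} (Cd b \<phi>)) integrable_on {0..2*pi}"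
      by (rule integrable_continuous_real, rule continuous_on_subset[OF Cd_int_cont[OF b(2)]]) auto
    have J: "integral {0..2*pi} (\<lambda>\<phi>. integral {0..TT} (Cd b \<phi>)) = (2 * b * (4 * pi)) *\<^sub>R f x"
    proof -
      have "integral {0..2*pi} (\<lambda>\<phi>. integral {0..TT} (Cd b \<phi>)) = integral {0..2*pi} (\<lambda>\<phi>. integral {-b..b} (G \<phi>))"
        by (rule integral_cong) (rule Cd_swap[OF b])
      also have "\<dots> = (2 * b * (4 * pi)) *\<^sub>R f x" by (rule G_outer[OF b])
      finally show ?thesis .
    qed
    have "I - (2 * b * (4 * pi)) *\<^sub>R f x = integral {0..2*pi} (\<lambda>\<phi>. integral {0..TT} (P \<phi>) - integral {0..TT} (Cd b \<phi>))"
      unfolding I_def J[symmetric] by (rule integral_diff[symmetric, OF iP iC])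
    also have "norm \<dots> \<le> (4 * TT * B * (TT * tan \<delta>)) * Henstock_Kurzweil_Integration.content (cbox 0 (2*pi))"
    proof (rule has_integral_bound)
      have "0 < tan \<delta>" using d by (intro tan_gt_zero) auto
      then show "0 \<le> 4 * TT * B * (TT * tan \<delta>)"
        using B TT_pos by (auto intro!: mult_nonneg_nonneg)
      show "((\<lambda>\<phi>. integral {0..TT} (P \<phi>) - integral {0..TT} (Cd b \<phi>)) has_integral
         integral {0..2*pi} (\<lambda>\<phi>. integral {0..TT} (P \<phi>) - integral {0..TT} (Cd b \<phi>))) (cbox 0 (2*pi))"
        unfolding box_real by (rule integrable_integral, rule integrable_diff[OF iP iC])
      fix \<phi> assume "\<phi> \<in> cbox 0 (2*pi)"
      then show "norm (integral {0..TT} (P \<phi>) - integral {0..TT} (Cd b \<phi>)) \<le> 4 * TT * B * (TT * tan \<delta>)"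
        using int_diff_bound[OF d B] by (simp add: b_def box_real)
    qed
    also have "\<dots> = C * tan \<delta>" by (simp add: C_def box_real)
    finally show ?thesis by (simp add: b_def)
  qed
  have l1: "((\<lambda>\<delta>. norm (I - (2 * (pi/2 - \<delta>) * (4 * pi)) *\<^sub>R f x)) \<longlongrightarrow>
      norm (I - (2 * (pi/2 - 0) * (4 * pi)) *\<^sub>R f x)) (at_right 0)"
    by (intro tendsto_intros)
  have l2: "((\<lambda>\<delta>. C * tan \<delta>) \<longlongrightarrow> C * tan 0) (at_right 0)"
    by (intro tendsto_intros) simp
  have ev: "eventually (\<lambda>\<delta>. norm (I - (2 * (pi/2 - \<delta>) * (4 * pi)) *\<^sub>R f x) \<le> C * tan \<delta>) (at_right 0)"
    unfolding eventually_at_right_field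
  proof (rule exI[of _ "pi/4"], intro conjI allI impI)
    show "(0::real) < pi/4" by simp
    fix y :: real assume "0 < y" "y < pi/4"
    then show "norm (I - (2 * (pi/2 - y) * (4 * pi)) *\<^sub>R f x) \<le> C * tan y"
      by (intro bound) auto
  qed
  have "norm (I - (2 * (pi/2 - 0) * (4 * pi)) *\<^sub>R f x) \<le> C * tan 0"
    by (rule tendsto_le[OF _ l2 l1 ev]) simp
  then have "I = (2 * (pi/2) * (4 * pi)) *\<^sub>R f x" by simp
  then show ?thesis by (simp add: I_def power2_eq_square algebra_simps)
qed

theorem inversion: "radon_inverse (radon f) x = f x"
proof -
  have "radon_inverse (radon f) x = (1 / (4 * pi)) *\<^sub>R integral {0..2*pi}
      (\<lambda>\<theta>. hilbert (\<lambda>s. vector_derivative (\<lambda>u. radon f (om \<theta>) u) (at s)) (x \<bullet> om \<theta>))"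
    by (simp add: radon_inverse_def om_def Let_def)
  also have "\<dots> = (1 / (4 * pi)) *\<^sub>R integral {0..2*pi} (\<lambda>\<theta>. (1 / pi) *\<^sub>R integral {0..TT} (P \<theta>))"
    by (simp add: hilbert_val)
  also have "\<dots> = (1 / (4 * pi)) *\<^sub>R ((1 / pi) *\<^sub>R ((4 * pi^2) *\<^sub>R f x))"
    by (simp add: main_identity)
  also have "\<dots> = f x" by (simp add: power2_eq_square)
  finally show ?thesis .
qed

end


locale beam =
  fixes h :: "real^2 \<Rightarrow> real" and r :: real
  assumes r_pos: "0 < r"
    and h_cont: "continuous_on UNIV h"
    and h_supp: "\<And>y. r \<le> norm y \<Longrightarrow> h y = 0"
begin

lemma h_cont'[continuous_intros]: "continuous_on S g \<Longrightarrow> continuous_on S (\<lambda>x. h (g x))"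
  by (rule continuous_on_compose2[OF h_cont]) auto

lemma h_supp_e: "norm (e::real^2) = 1 \<Longrightarrow> r \<le> \<bar>p \<bullet> e\<bar> \<Longrightarrow> h p = 0"
  using h_supp[of p] abs_inner_unit_le[of e p] by auto

lemma radon_h:
  assumes "norm \<psi> = 1"
  shows "((\<lambda>t. h (v *\<^sub>R \<psi> + t *\<^sub>R perp \<psi>)) has_integral radon h \<psi> v) UNIV"
    and "radon h \<psi> v = integral {-r..r} (\<lambda>t. h (v *\<^sub>R \<psi> + t *\<^sub>R perp \<psi>))"
proof -
  have n: "norm (perp \<psi>) = 1" using assms by simp
  have tt: "\<psi> \<bullet> \<psi> = 1" using assms by (simp add: norm_eq_1)
  have "((\<lambda>t. h (v *\<^sub>R \<psi> + t *\<^sub>R perp \<psi>)) has_integral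
           integral {-r..r} (\<lambda>t. h (v *\<^sub>R \<psi> + t *\<^sub>R perp \<psi>))) UNIV"
  proof (rule supp_has_integral)
    show "continuous_on {-r..r} (\<lambda>t. h (v *\<^sub>R \<psi> + t *\<^sub>R perp \<psi>))"
      by (intro continuous_intros)
    fix t assume "t \<notin> {-r..r}"
    then show "h (v *\<^sub>R \<psi> + t *\<^sub>R perp \<psi>) = 0"
      using h_supp_e[OF n, of "v *\<^sub>R \<psi> + t *\<^sub>R perp \<psi>"] tt
      by (auto simp: inner_add_left)
  qed
  then show "((\<lambda>t. h (v *\<^sub>R \<psi> + t *\<^sub>R perp \<psi>)) has_integral radon h \<psi> v) UNIV"
    "radon h \<psi> v = integral {-r..r} (\<lambda>t. h (v *\<^sub>R \<psi> + t *\<^sub>R perp \<psi>))"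
    by (auto simp: radon_def dest: integral_unique)
qed

lemma radon_h_cont:
  assumes "norm \<psi> = 1"
  shows "continuous_on UNIV (radon h \<psi>)"
proof -
  have "continuous_on UNIV (\<lambda>v. integral (cbox (-r) r) (\<lambda>t. h (v *\<^sub>R \<psi> + t *\<^sub>R perp \<psi>)))"
    by (rule integral_continuous_on_param) (simp add: split_beta, intro continuous_intros)
  then show ?thesis using radon_h(2)[OF assms] by (simp add: box_real)
qed

lemma radon_h_zero:
  assumes "norm \<psi> = 1" "r \<le> \<bar>v\<bar>"
  shows "radon h \<psi> v = 0"
proof -
  have tt: "\<psi> \<bullet> \<psi> = 1" using assms by (simp add: norm_eq_1)
  have "h (v *\<^sub>R \<psi> + t *\<^sub>R perp \<psi>) = 0" for t
    using h_supp_e[OF assms(1), of "v *\<^sub>R \<psi> + t *\<^sub>R perp \<psi>"] tt assms(2)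
    by (simp add: inner_add_left)
  then show ?thesis by (simp add: radon_def)
qed

context
  fixes \<gamma> \<psi> :: "real^2"
  assumes ng: "norm \<gamma> = 1" and np: "norm \<psi> = 1" and a0: "\<psi> \<bullet> \<gamma> \<noteq> 0"
begin

lemma dec_g: "\<gamma> = (\<psi> \<bullet> \<gamma>) *\<^sub>R \<psi> + (\<gamma> \<bullet> perp \<psi>) *\<^sub>R perp \<psi>"
  using decomp_unit[OF np, of \<gamma>] by (simp add: inner_commute)

lemma bb_le: "\<bar>\<gamma> \<bullet> perp \<psi>\<bar> \<le> 1"
  using abs_inner_unit_le[of "perp \<psi>" \<gamma>] np ng by simp

lemma pt_eq: "u *\<^sub>R \<psi> + t *\<^sub>R perp \<psi> + \<tau> *\<^sub>R \<gamma> =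
   (u + \<tau> * (\<psi> \<bullet> \<gamma>)) *\<^sub>R \<psi> + (t + \<tau> * (\<gamma> \<bullet> perp \<psi>)) *\<^sub>R perp \<psi>"
  by (subst (1) dec_g) (simp add: algebra_simps)

lemma pt_inner:
  "(u *\<^sub>R \<psi> + t *\<^sub>R perp \<psi> + \<tau> *\<^sub>R \<gamma>) \<bullet> \<psi> = u + \<tau> * (\<psi> \<bullet> \<gamma>)"
  "(u *\<^sub>R \<psi> + t *\<^sub>R perp \<psi> + \<tau> *\<^sub>R \<gamma>) \<bullet> perp \<psi> = t + \<tau> * (\<gamma> \<bullet> perp \<psi>)"
proof -
  have tt: "\<psi> \<bullet> \<psi> = 1" "perp \<psi> \<bullet> perp \<psi> = 1" using np by (simp_all add: norm_eq_1)
  show "(u *\<^sub>R \<psi> + t *\<^sub>R perp \<psi> + \<tau> *\<^sub>R \<gamma>) \<bullet> \<psi> = u + \<tau> * (\<psi> \<bullet> \<gamma>)"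
    "(u *\<^sub>R \<psi> + t *\<^sub>R perp \<psi> + \<tau> *\<^sub>R \<gamma>) \<bullet> perp \<psi> = t + \<tau> * (\<gamma> \<bullet> perp \<psi>)"
    unfolding pt_eq using tt by (simp_all add: inner_add_left inner_add_right)
qed

definition TW :: "real \<Rightarrow> real" where "TW W = (W + r) / \<bar>\<psi> \<bullet> \<gamma>\<bar>"

lemma TW_pos: "0 \<le> W \<Longrightarrow> 0 < TW W"
  using a0 r_pos by (simp add: TW_def)

lemma TW_a: "TW W * \<bar>\<psi> \<bullet> \<gamma>\<bar> = W + r"
  using a0 by (simp add: TW_def)

lemma L_A:
  assumes u: "\<bar>u\<bar> \<le> W"
  shows "divbeam \<gamma> h (u *\<^sub>R \<psi> + t *\<^sub>R perp \<psi>) = integral {0..TW W} (\<lambda>\<tau>. h (u *\<^sub>R \<psi> + t *\<^sub>R perp \<psi> + \<tau> *\<^sub>R \<gamma>))"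
proof -
  have W: "0 \<le> W" using u by simp
  have "((\<lambda>\<tau>. h (u *\<^sub>R \<psi> + t *\<^sub>R perp \<psi> + \<tau> *\<^sub>R \<gamma>)) has_integral
     integral {0..TW W} (\<lambda>\<tau>. h (u *\<^sub>R \<psi> + t *\<^sub>R perp \<psi> + \<tau> *\<^sub>R \<gamma>))) {0..TW W}"
    by (rule integrable_integral, rule integrable_continuous_real) (intro continuous_intros)
  then have "((\<lambda>\<tau>. h (u *\<^sub>R \<psi> + t *\<^sub>R perp \<psi> + \<tau> *\<^sub>R \<gamma>)) has_integral
     integral {0..TW W} (\<lambda>\<tau>. h (u *\<^sub>R \<psi> + t *\<^sub>R perp \<psi> + \<tau> *\<^sub>R \<gamma>))) {0..}"
  proof (rule has_integral_superset2)
    show "{0..TW W} \<subseteq> {0..}" by auto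
    fix \<tau> assume "\<tau> \<in> {0..} - {0..TW W}"
    then have \<tau>: "TW W < \<tau>" by auto
    have "W + r < \<tau> * \<bar>\<psi> \<bullet> \<gamma>\<bar>"
      using mult_strict_right_mono[OF \<tau>, of "\<bar>\<psi> \<bullet> \<gamma>\<bar>"] a0 TW_a[of W] by simp
    then have "r \<le> \<bar>u + \<tau> * (\<psi> \<bullet> \<gamma>)\<bar>" using u \<tau> TW_pos[OF W]
      by (simp add: abs_mult)
    then show "h (u *\<^sub>R \<psi> + t *\<^sub>R perp \<psi> + \<tau> *\<^sub>R \<gamma>) = 0"
      using h_supp_e[OF np] pt_inner(1) by metis
  qed
  then show ?thesis by (simp add: divbeam_def integral_unique)
qed

lemma L_B:
  assumes t: "TW W + r \<le> \<bar>t\<bar>" and \<tau>: "\<tau> \<in> {0..TW W}"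
  shows "h (u *\<^sub>R \<psi> + t *\<^sub>R perp \<psi> + \<tau> *\<^sub>R \<gamma>) = 0"
proof -
  have "\<tau> * \<bar>\<gamma> \<bullet> perp \<psi>\<bar> \<le> \<tau> * 1"
    using \<tau> bb_le by (intro mult_left_mono) auto
  then have "\<bar>\<tau> * (\<gamma> \<bullet> perp \<psi>)\<bar> \<le> TW W"
    using \<tau> by (simp add: abs_mult)
  then have "r \<le> \<bar>t + \<tau> * (\<gamma> \<bullet> perp \<psi>)\<bar>" using t by linarith
  then show ?thesis using h_supp_e[of "perp \<psi>"] np pt_inner(2) by (metis norm_perp)
qed

lemma L_C:
  assumes u: "\<bar>u\<bar> \<le> W"
  shows "((\<lambda>t. divbeam \<gamma> h (u *\<^sub>R \<psi> + t *\<^sub>R perp \<psi>)) has_integral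
           integral {0..TW W} (\<lambda>\<tau>. radon h \<psi> (u + \<tau> * (\<psi> \<bullet> \<gamma>)))) UNIV"
proof -
  define T' where "T' = TW W + r"
  define g where "g = (\<lambda>t \<tau>. h (u *\<^sub>R \<psi> + t *\<^sub>R perp \<psi> + \<tau> *\<^sub>R \<gamma>))"
  define k where "k = (\<lambda>t. integral (cbox 0 (TW W)) (g t))"
  have gc: "continuous_on UNIV (\<lambda>(t, \<tau>). g t \<tau>)" unfolding g_def split_beta by (intro continuous_intros)
  have kc: "continuous_on UNIV k"
    unfolding k_def by (rule integral_continuous_on_param, rule continuous_on_subset[OF gc]) auto
  have k0: "k t = 0" if "t \<notin> {-T'..T'}" for t
  proof -
    have "TW W + r \<le> \<bar>t\<bar>" using that by (auto simp: T'_def)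
    then have "g t \<tau> = 0" if "\<tau> \<in> cbox 0 (TW W)" for \<tau>
      using L_B that by (simp add: g_def box_real)
    then have "integral (cbox 0 (TW W)) (g t) = integral (cbox 0 (TW W)) (\<lambda>_. 0)"
      by (intro integral_cong) auto
    then show ?thesis unfolding k_def by simp
  qed
  have "(k has_integral integral {-T'..T'} k) UNIV"
    by (rule supp_has_integral[OF continuous_on_subset[OF kc] k0]) auto
  moreover have "divbeam \<gamma> h (u *\<^sub>R \<psi> + t *\<^sub>R perp \<psi>) = k t" for t
    using L_A[OF u] by (simp add: k_def g_def box_real)
  moreover have "integral {-T'..T'} k = integral {0..TW W} (\<lambda>\<tau>. radon h \<psi> (u + \<tau> * (\<psi> \<bullet> \<gamma>)))"
  proof -
    have "integral {-T'..T'} k = integral (cbox (-T') T') (\<lambda>t. integral (cbox 0 (TW W)) (g t))"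
      by (simp add: k_def box_real)
    also have "\<dots> = integral (cbox 0 (TW W)) (\<lambda>\<tau>. integral (cbox (-T') T') (\<lambda>t. g t \<tau>))"
      by (rule integral_swap_continuous, rule continuous_on_subset[OF gc]) auto
    also have "\<dots> = integral {0..TW W} (\<lambda>\<tau>. radon h \<psi> (u + \<tau> * (\<psi> \<bullet> \<gamma>)))"
      unfolding box_real
    proof (rule integral_cong)
      fix \<tau> assume \<tau>: "\<tau> \<in> {0..TW W}"
      define c where "c = \<tau> * (\<gamma> \<bullet> perp \<psi>)"
      define q where "q = (\<lambda>t. h ((u + \<tau> * (\<psi> \<bullet> \<gamma>)) *\<^sub>R \<psi> + t *\<^sub>R perp \<psi>))"
      have qc: "continuous_on UNIV q" unfolding q_def by (intro continuous_intros)
      have q0: "q t = 0" if "t \<notin> {-r..r}" for t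
      proof -
        have tt: "\<psi> \<bullet> \<psi> = 1" "perp \<psi> \<bullet> perp \<psi> = 1" using np by (simp_all add: norm_eq_1)
        have "r \<le> \<bar>((u + \<tau> * (\<psi> \<bullet> \<gamma>)) *\<^sub>R \<psi> + t *\<^sub>R perp \<psi>) \<bullet> perp \<psi>\<bar>"
          using that tt by (auto simp: inner_add_left)
        then show ?thesis unfolding q_def by (rule h_supp_e[rotated]) (simp add: np)
      qed
      have cb: "\<bar>c\<bar> \<le> TW W"
      proof -
        have "\<tau> * \<bar>\<gamma> \<bullet> perp \<psi>\<bar> \<le> \<tau> * 1"
          using \<tau> bb_le by (intro mult_left_mono) auto
        then show ?thesis using \<tau> by (simp add: abs_mult c_def)
      qed
      have "integral {-T'..T'} (\<lambda>t. g t \<tau>) = integral {(-T' + c) - c..(T' + c) - c} (\<lambda>t. q (t + c))"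
        by (simp add: g_def q_def pt_eq c_def)
      also have "\<dots> = integral {-T' + c..T' + c} q" by (rule integral_shift_real_ivl)
      also have "\<dots> = integral {-r..r} q"
        by (rule supp_integral_eq[OF qc q0]) (use cb in \<open>auto simp: T'_def\<close>)
      also have "\<dots> = radon h \<psi> (u + \<tau> * (\<psi> \<bullet> \<gamma>))" using radon_h(2)[OF np] by (simp add: q_def)
      finally show "integral {-T'..T'} (\<lambda>t. g t \<tau>) = radon h \<psi> (u + \<tau> * (\<psi> \<bullet> \<gamma>))" .
    qed
    finally show ?thesis .
  qed
  ultimately show ?thesis by simp
qed

lemma L_int: "((\<lambda>t. divbeam \<gamma> h (u *\<^sub>R \<psi> + t *\<^sub>R perp \<psi>)) has_integral radon (divbeam \<gamma> h) \<psi> u) UNIV"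
proof -
  have "((\<lambda>t. divbeam \<gamma> h (u *\<^sub>R \<psi> + t *\<^sub>R perp \<psi>)) has_integral
           integral {0..TW \<bar>u\<bar>} (\<lambda>\<tau>. radon h \<psi> (u + \<tau> * (\<psi> \<bullet> \<gamma>)))) UNIV"
    by (rule L_C) simp
  then show ?thesis by (simp add: radon_def integral_unique)
qed

lemma L_F: "((\<lambda>u. radon (divbeam \<gamma> h) \<psi> u) has_real_derivative (- radon h \<psi> s / (\<psi> \<bullet> \<gamma>))) (at s)"
proof -
  define W where "W = \<bar>s\<bar> + 1"
  define a where "a = \<psi> \<bullet> \<gamma>"
  define T where "T = TW W"
  define L where "L = 2 * W + r + 1"
  define Rh where "Rh = radon h \<psi>"
  define Psi where "Psi = (\<lambda>v. integral {-L..v} Rh)"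
  have W: "0 \<le> W" by (simp add: W_def)
  have a: "a \<noteq> 0" using a0 by (simp add: a_def)
  have T: "0 < T" "T * \<bar>a\<bar> = W + r" using TW_pos[OF W] TW_a[of W] by (simp_all add: T_def a_def)
  have Rc: "continuous_on UNIV Rh" unfolding Rh_def by (rule radon_h_cont[OF np])
  have dPsi: "(Psi has_real_derivative Rh v) (at v)" if v: "\<bar>v\<bar> < L" for v
  proof -
    have "(Psi has_vector_derivative Rh v) (at v within {-L..L})"
      unfolding Psi_def by (rule integral_has_vector_derivative, rule continuous_on_subset[OF Rc]) (use v in auto)
    moreover have "at v within {-L..L} = at v" using v by (intro at_within_Icc_at) auto
    ultimately show ?thesis by (simp add: has_real_derivative_iff_has_vector_derivative)
  qed
  have rep: "radon (divbeam \<gamma> h) \<psi> u = (Psi (u + T * a) - Psi u) / a" if u: "\<bar>u\<bar> \<le> W" for u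
  proof -
    have "((\<lambda>t. divbeam \<gamma> h (u *\<^sub>R \<psi> + t *\<^sub>R perp \<psi>)) has_integral
           integral {0..T} (\<lambda>\<tau>. Rh (u + \<tau> * a))) UNIV"
      using L_C[OF u] by (simp add: T_def a_def Rh_def)
    then have r1: "radon (divbeam \<gamma> h) \<psi> u = integral {0..T} (\<lambda>\<tau>. Rh (u + \<tau> * a))"
      by (simp add: radon_def integral_unique)
    have "((\<lambda>\<tau>. Rh (u + \<tau> * a) * a) has_integral (Psi (u + T * a) - Psi (u + 0 * a))) {0..T}"
    proof (rule fundamental_theorem_of_calculus)
      show "0 \<le> T" using T by simp
      fix \<tau> assume \<tau>: "\<tau> \<in> {0..T}"
      have "\<bar>\<tau>\<bar> * \<bar>a\<bar> \<le> T * \<bar>a\<bar>" using \<tau> by (intro mult_right_mono) auto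
      then have "\<bar>\<tau> * a\<bar> \<le> T * \<bar>a\<bar>" by (simp add: abs_mult)
      moreover have "\<bar>u + \<tau> * a\<bar> \<le> \<bar>u\<bar> + \<bar>\<tau> * a\<bar>" by (rule abs_triangle_ineq)
      ultimately have "\<bar>u + \<tau> * a\<bar> < L" using u T(2) r_pos unfolding L_def by linarith
      then have "((\<lambda>\<tau>. Psi (u + \<tau> * a)) has_real_derivative Rh (u + \<tau> * a) * a) (at \<tau>)"
        by (rule DERIV_chain2[OF dPsi]) (auto intro!: derivative_eq_intros)
      then show "((\<lambda>\<tau>. Psi (u + \<tau> * a)) has_vector_derivative Rh (u + \<tau> * a) * a) (at \<tau> within {0..T})"
        by (simp add: has_real_derivative_iff_has_vector_derivative has_vector_derivative_at_within)
    qed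
    from integral_unique[OF this]
    have "integral {0..T} (\<lambda>\<tau>. Rh (u + \<tau> * a) * a) = Psi (u + T * a) - Psi (u + 0 * a)" .
    moreover have "integral {0..T} (\<lambda>\<tau>. Rh (u + \<tau> * a) * a) = integral {0..T} (\<lambda>\<tau>. Rh (u + \<tau> * a)) * a"
      by (rule integral_mult_left)
    ultimately have "integral {0..T} (\<lambda>\<tau>. Rh (u + \<tau> * a)) * a = Psi (u + T * a) - Psi u" by simp
    then have "integral {0..T} (\<lambda>\<tau>. Rh (u + \<tau> * a)) = (Psi (u + T * a) - Psi u) / a"
      using a by (simp add: eq_divide_eq)
    then show ?thesis by (simp add: r1)
  qed
  have d: "((\<lambda>u. (Psi (u + T * a) - Psi u) / a) has_real_derivative (Rh (s + T * a) - Rh s) / a) (at s)"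
  proof -
    have ta: "\<bar>T * a\<bar> = W + r" using T by (simp add: abs_mult)
    have "\<bar>s + T * a\<bar> \<le> \<bar>s\<bar> + \<bar>T * a\<bar>" by (rule abs_triangle_ineq)
    then have l1a: "\<bar>s + T * a\<bar> < L" using ta r_pos unfolding L_def W_def by (smt (verit))
    have l1b: "\<bar>s\<bar> < L" using r_pos abs_ge_zero[of s] unfolding L_def W_def by (smt (verit))
    note l1 = l1a l1b
    have g: "((\<lambda>u. u + T * a) has_real_derivative 1) (at s)" by (auto intro!: derivative_eq_intros)
    have d1: "((\<lambda>u. Psi (u + T * a)) has_real_derivative Rh (s + T * a) * 1) (at s)"
      by (rule DERIV_chain2[OF dPsi[OF l1(1)] g])
    have d2: "(Psi has_real_derivative Rh s) (at s)" by (rule dPsi[OF l1(2)])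
    have "((\<lambda>u. Psi (u + T * a) - Psi u) has_real_derivative Rh (s + T * a) * 1 - Rh s) (at s)"
      by (rule DERIV_diff[OF d1 d2])
    from DERIV_cdivide[OF this, of a] show ?thesis by simp
  qed
  have "Rh (s + T * a) = 0"
  proof -
    have "\<bar>T * a\<bar> = W + r" using T by (simp add: abs_mult)
    moreover have "\<bar>T * a\<bar> \<le> \<bar>s + T * a\<bar> + \<bar>s\<bar>" using abs_triangle_ineq[of "s + T * a" "-s"] by simp
    ultimately have "r \<le> \<bar>s + T * a\<bar>" unfolding W_def by linarith
    then show ?thesis unfolding Rh_def by (rule radon_h_zero[OF np])
  qed
  with d have d': "((\<lambda>u. (Psi (u + T * a) - Psi u) / a) has_real_derivative (- radon h \<psi> s / (\<psi> \<bullet> \<gamma>))) (at s)"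
    by (simp add: Rh_def a_def)
  show ?thesis
  proof (rule has_field_derivative_transform_within_open[OF d' open_greaterThanLessThan[of "-W" W]])
    show "s \<in> {-W<..<W}" by (auto simp: W_def)
    fix u assume "u \<in> {-W<..<W}"
    then show "(Psi (u + T * a) - Psi u) / a = radon (divbeam \<gamma> h) \<psi> u" using rep by auto
  qed
qed

end

end


lemma bl_perp: "bounded_linear perp"
  using linear_perp linear_conv_bounded_linear by blast

lemma perp_cont[continuous_intros]: "continuous_on S g \<Longrightarrow> continuous_on S (\<lambda>z. perp (g z))"
  by (rule continuous_on_compose2[OF linear_continuous_on[OF bl_perp]]) auto

lemma deriv_zero_open:
  assumes U: "open U" "x \<in> U" and g0: "\<And>y. y \<in> U \<Longrightarrow> g y = 0"
    and d: "(g has_derivative g') (at x)"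
  shows "g' = (\<lambda>_. 0)"
proof -
  have "((\<lambda>_. 0) has_derivative (\<lambda>_. 0)) (at x)" by simp
  then have "(g has_derivative (\<lambda>_. 0)) (at x)"
    by (rule has_derivative_transform_within_open[OF _ U]) (use g0 in auto)
  then show ?thesis using has_derivative_unique[OF d] by blast
qed

lemma vec2_repr: "(y::real^2) = (y$1) *\<^sub>R e1 + (y$2) *\<^sub>R e2"
  by (simp add: vec2_eq e1_def e2_def)

lemma C2c_to_c2c:
  assumes fC: "C2c_field (ball 0 r) f" and r: "0 < r"
  obtains Df D2 where "c2c f Df D2 r"
proof -
  have "\<forall>j. \<exists>p. (\<forall>x. ((\<lambda>x. f x $ j) has_derivative blinfun_apply (fst p x)) (at x)) \<and>
      (\<forall>x. (fst p has_derivative blinfun_apply (snd p x)) (at x)) \<and> continuous_on UNIV (snd p)"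
    using fC unfolding C2c_field_def C2_def by fastforce
  then obtain P where P: "\<And>j. (\<forall>x. ((\<lambda>x. f x $ j) has_derivative blinfun_apply (fst (P j) x)) (at x)) \<and>
      (\<forall>x. (fst (P j) has_derivative blinfun_apply (snd (P j) x)) (at x)) \<and> continuous_on UNIV (snd (P j))"
    by metis
  define Dc where "Dc j = fst (P j)" for j
  define D2c where "D2c j = snd (P j)" for j
  have dc: "((\<lambda>x. f x $ j) has_derivative blinfun_apply (Dc j x)) (at x)" for j x
    using P unfolding Dc_def by blast
  have d2c: "(Dc j has_derivative blinfun_apply (D2c j x)) (at x)" for j x
    using P unfolding Dc_def D2c_def by blast
  have c2c: "continuous_on UNIV (D2c j)" for j
    using P unfolding D2c_def by blast
  define L1 where "L1 = blinfun_scaleR_left e1"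
  define L2 where "L2 = blinfun_scaleR_left e2"
  have blc1: "bounded_linear (\<lambda>B. L1 o\<^sub>L (B::(real^2) \<Rightarrow>\<^sub>L real))"
    by (rule bounded_bilinear.bounded_linear_right[OF bounded_bilinear_blinfun_compose])
  have blc2: "bounded_linear (\<lambda>B. L2 o\<^sub>L (B::(real^2) \<Rightarrow>\<^sub>L real))"
    by (rule bounded_bilinear.bounded_linear_right[OF bounded_bilinear_blinfun_compose])
  define M1 where "M1 = Blinfun (\<lambda>B. L1 o\<^sub>L (B::(real^2) \<Rightarrow>\<^sub>L real))"
  define M2 where "M2 = Blinfun (\<lambda>B. L2 o\<^sub>L (B::(real^2) \<Rightarrow>\<^sub>L real))"
  have M1a: "blinfun_apply M1 = (\<lambda>B. L1 o\<^sub>L B)" unfolding M1_def by (rule bounded_linear_Blinfun_apply[OF blc1])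
  have M2a: "blinfun_apply M2 = (\<lambda>B. L2 o\<^sub>L B)" unfolding M2_def by (rule bounded_linear_Blinfun_apply[OF blc2])
  define Df where "Df x = (L1 o\<^sub>L Dc 1 x) + (L2 o\<^sub>L Dc 2 x)" for x
  define D2 where "D2 x = (M1 o\<^sub>L D2c 1 x) + (M2 o\<^sub>L D2c 2 x)" for x
  have fD: "(f has_derivative blinfun_apply (Df x)) (at x)" for x
  proof -
    have "((\<lambda>x. (f x $ 1) *\<^sub>R e1 + (f x $ 2) *\<^sub>R e2) has_derivative
        (\<lambda>h. Dc 1 x h *\<^sub>R e1 + Dc 2 x h *\<^sub>R e2)) (at x)"
      by (intro has_derivative_add bounded_linear.has_derivative[OF bounded_linear_scaleR_left] dc)
    moreover have "(\<lambda>x. (f x $ 1) *\<^sub>R e1 + (f x $ 2) *\<^sub>R e2) = f"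
      by (rule ext) (rule vec2_repr[symmetric])
    moreover have "blinfun_apply (Df x) = (\<lambda>h. Dc 1 x h *\<^sub>R e1 + Dc 2 x h *\<^sub>R e2)"
      by (rule ext) (simp add: Df_def L1_def L2_def blinfun.add_left)
    ultimately show ?thesis by simp
  qed
  have DD: "(Df has_derivative blinfun_apply (D2 x)) (at x)" for x
  proof -
    have "((\<lambda>x. M1 (Dc 1 x) + M2 (Dc 2 x)) has_derivative (\<lambda>h. M1 (D2c 1 x h) + M2 (D2c 2 x h))) (at x)"
      by (intro has_derivative_add bounded_linear.has_derivative[OF blinfun.bounded_linear_right] d2c)
    moreover have "(\<lambda>x. M1 (Dc 1 x) + M2 (Dc 2 x)) = Df"
      by (rule ext) (simp add: M1a M2a Df_def)
    moreover have "blinfun_apply (D2 x) = (\<lambda>h. M1 (D2c 1 x h) + M2 (D2c 2 x h))"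
      by (rule ext) (simp add: D2_def blinfun.add_left)
    ultimately show ?thesis by simp
  qed
  have D2cont: "continuous_on UNIV D2"
    unfolding D2_def using c2c[of 1] c2c[of 2] by (intro continuous_intros)
  have supp: "f x = 0 \<and> Df x = 0 \<and> D2 x = 0" if x: "r \<le> norm x" for x
  proof -
    define U where "U = - closure {x. f x \<noteq> 0}"
    have oU: "open U" unfolding U_def by (rule open_Compl) simp
    have xU: "x \<in> U" using fC x by (auto simp: U_def C2c_field_def)
    have fU: "f y = 0" if "y \<in> U" for y
      using that closure_subset[of "{x. f x \<noteq> 0}"] by (auto simp: U_def)
    have Dc0: "Dc j y = 0" if "y \<in> U" for j y
    proof -
      have "blinfun_apply (Dc j y) = (\<lambda>_. 0)"
        by (rule deriv_zero_open[OF oU that _ dc]) (simp add: fU)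
      then show ?thesis by (intro blinfun_eqI) simp
    qed
    have D2c0: "D2c j x = 0" for j
    proof -
      have "blinfun_apply (D2c j x) = (\<lambda>_. 0)"
        by (rule deriv_zero_open[OF oU xU _ d2c]) (simp add: Dc0)
      then show ?thesis by (intro blinfun_eqI) simp
    qed
    show ?thesis using fU[OF xU] Dc0[OF xU] D2c0 by (simp add: Df_def D2_def)
  qed
  have "c2c f Df D2 r"
  proof (unfold_locales)
    show "0 < r" by (rule r)
    show "(f has_derivative blinfun_apply (Df x)) (at x)" for x by (rule fD)
    show "(Df has_derivative blinfun_apply (D2 x)) (at x)" for x by (rule DD)
    show "continuous_on UNIV D2" by (rule D2cont)
    show "r \<le> norm x \<Longrightarrow> f x = 0 \<and> Df x = 0 \<and> D2 x = 0" for x by (rule supp)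
  qed
  then show ?thesis by (rule that)
qed


context c2c begin

lemma radon_cont: "continuous_on (sphere 0 1 \<times> UNIV) (\<lambda>(\<psi>, s). radon f \<psi> s)"
proof -
  have "continuous_on (sphere 0 1 \<times> UNIV)
     (\<lambda>z. integral (cbox (-r) r) (\<lambda>t. f (snd z *\<^sub>R fst z + t *\<^sub>R perp (fst z))))"
    by (rule integral_continuous_on_param) (simp add: split_beta, intro continuous_intros)
  moreover have "integral (cbox (-r) r) (\<lambda>t. f (snd z *\<^sub>R fst z + t *\<^sub>R perp (fst z))) = (\<lambda>(\<psi>, s). radon f \<psi> s) z"
    if "z \<in> sphere 0 1 \<times> UNIV" for z
    using that radon_int(2)[of "fst z" r "snd z"] by (auto simp: box_real split_beta)
  ultimately show ?thesis by (rule continuous_on_eq)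
qed

end

lemma sphere_limpt:
  assumes \<psi>: "\<psi> \<in> sphere (0::real^2) 1"
  shows "\<psi> islimpt sphere 0 1"
proof -
  have "(\<psi>$1)\<^sup>2 + (\<psi>$2)\<^sup>2 = 1" using \<psi> by (simp add: norm2)
  then obtain \<phi> where "\<psi>$1 = cos \<phi>" "\<psi>$2 = sin \<phi>" by (rule sincos_total_2pi) auto
  then have \<psi>\<phi>: "\<psi> = om \<phi>" by (simp add: vec2_eq)
  show ?thesis
    unfolding islimpt_approachable
  proof (intro allI impI)
    fix e :: real assume e: "0 < e"
    have "continuous_on UNIV (\<lambda>t. om (\<phi> + t))" by (intro om_cont continuous_intros)
    then have "isCont (\<lambda>t. om (\<phi> + t)) 0" by (simp add: continuous_on_eq_continuous_at)
    then have "((\<lambda>t. om (\<phi> + t)) \<longlongrightarrow> om \<phi>) (at 0)" by (simp add: isCont_def)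
    then have "((\<lambda>t. om (\<phi> + t)) \<longlongrightarrow> om \<phi>) (at_right 0)"
      by (rule tendsto_mono[OF at_le, rotated]) simp
    then have ev1: "eventually (\<lambda>t. dist (om (\<phi> + t)) (om \<phi>) < e) (at_right 0)"
      using e by (rule tendstoD)
    have ev2: "eventually (\<lambda>t::real. 0 < t \<and> t < pi) (at_right 0)"
      unfolding eventually_at_right_field by (rule exI[of _ pi]) auto
    obtain t where t: "dist (om (\<phi> + t)) (om \<phi>) < e" "0 < t" "t < pi"
      using eventually_happens'[OF _ eventually_conj[OF ev1 ev2]] by auto
    have "om (\<phi> + t) \<bullet> perp (om \<phi>) = sin t"
      by (simp add: om_add inner_add_left norm_eq_1[symmetric])
    moreover have "sin t > 0" using t by (intro sin_gt_zero) auto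
    ultimately have "om (\<phi> + t) \<noteq> om \<phi>" by auto
    then show "\<exists>x'\<in>sphere 0 1. x' \<noteq> \<psi> \<and> dist x' \<psi> < e"
      using t \<psi>\<phi> by (intro bexI[of _ "om (\<phi> + t)"]) auto
  qed
qed

lemma dense_eq:
  fixes G1 G2 :: "real^2 \<Rightarrow> 'b::t2_space"
  assumes Z: "finite Z" and c: "continuous_on (sphere 0 1) G1" "continuous_on (sphere 0 1) G2"
    and eq: "\<And>y. y \<in> sphere 0 1 - Z \<Longrightarrow> G1 y = G2 y" and \<psi>: "\<psi> \<in> sphere 0 1"
  shows "G1 \<psi> = G2 \<psi>"
proof -
  have "sphere 0 1 = (Z \<inter> sphere 0 1) \<union> (sphere (0::real^2) 1 - Z)" by auto
  then have "\<psi> islimpt (sphere 0 1 - Z)"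
    using sphere_limpt[OF \<psi>] islimpt_Un_finite[of "Z \<inter> sphere 0 1" \<psi> "sphere 0 1 - Z"] Z by simp
  then have nt: "\<not> trivial_limit (at \<psi> within (sphere 0 1 - Z))" by (simp add: trivial_limit_within)
  have l1: "(G1 \<longlongrightarrow> G1 \<psi>) (at \<psi> within (sphere 0 1 - Z))"
    using c(1) \<psi> unfolding continuous_on_def by (blast intro: tendsto_within_subset)
  have l2: "(G2 \<longlongrightarrow> G2 \<psi>) (at \<psi> within (sphere 0 1 - Z))"
    using c(2) \<psi> unfolding continuous_on_def by (blast intro: tendsto_within_subset)
  have ev: "eventually (\<lambda>y. G1 y = G2 y) (at \<psi> within (sphere 0 1 - Z))"
    using eq by (auto simp: eventually_at_filter)
  have "(G2 \<longlongrightarrow> G1 \<psi>) (at \<psi> within (sphere 0 1 - Z))"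
    by (rule tendsto_cong[THEN iffD1, OF ev l1])
  from tendsto_unique[OF nt this l2] show ?thesis .
qed


lemma vector2_alt: "(vector [a, b] :: real^2) = a *\<^sub>R e1 + b *\<^sub>R e2"
  by (simp add: vec2_eq e1_def e2_def)

lemma vec_has_int:
  assumes "(p has_integral P) S" "(q has_integral Q) S"
  shows "((\<lambda>t. vector [p t, q t] :: real^2) has_integral vector [P, Q]) S"
  unfolding vector2_alt
  by (intro has_integral_add has_integral_scaleR_left assms)

lemma vec_has_deriv:
  assumes "(p has_real_derivative P) (at u)" "(q has_real_derivative Q) (at u)"
  shows "((\<lambda>u. vector [p u, q u] :: real^2) has_vector_derivative vector [P, Q]) (at u)"
  unfolding vector2_alt using assms
  by (auto intro!: derivative_eq_intros)

lemma beam_comp: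
  fixes f :: "real^2 \<Rightarrow> real^2"
  assumes "c2c f Df D2 r"
  shows "beam (\<lambda>y. f y \<bullet> v) r"
proof
  show "0 < r" using c2c.r_pos[OF assms] .
  show "continuous_on UNIV (\<lambda>y. f y \<bullet> v)"
    using c2c.f_cont[OF assms] by (intro continuous_intros)
  show "r \<le> norm y \<Longrightarrow> f y \<bullet> v = 0" for y using c2c.supp[OF assms, of y] by simp
qed

lemma radon_inner:
  fixes f :: "real^2 \<Rightarrow> real^2"
  assumes "c2c f Df D2 r" "norm \<psi> = 1"
  shows "radon (\<lambda>y. f y \<bullet> v) \<psi> u = radon f \<psi> u \<bullet> v"
proof -
  have "((\<lambda>t. f (u *\<^sub>R \<psi> + t *\<^sub>R perp \<psi>)) has_integral radon f \<psi> u) UNIV"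
    using c2c.radon_int[OF assms(1) assms(2) order_refl, of u] by simp
  from has_integral_linear[OF this bounded_linear_inner_left[of v]]
  have "((\<lambda>t. f (u *\<^sub>R \<psi> + t *\<^sub>R perp \<psi>) \<bullet> v) has_integral radon f \<psi> u \<bullet> v) UNIV"
    by (simp add: o_def)
  then show ?thesis by (simp add: radon_def integral_unique)
qed

lemma Qmat_inv:
  assumes g: "gamma_psi m c gam \<psi> \<noteq> 0"
  shows "Qmat m c gam \<psi> *v ((vector [gamma_psi m c gam \<psi>, perp (gamma_psi m c gam \<psi>)] :: real^2^2) *v v) = v"
proof -
  define gg where "gg = gamma_psi m c gam \<psi>"
  define M where "M = (vector [gg, perp gg] :: real^2^2)"
  have "gg$1 \<noteq> 0 \<or> gg$2 \<noteq> 0" using g by (auto simp: gg_def vec2_eq)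
  then have "0 < (gg$1)\<^sup>2 + (gg$2)\<^sup>2" by (auto simp: add_pos_nonneg add_nonneg_pos)
  moreover have "det M = (gg$1)\<^sup>2 + (gg$2)\<^sup>2"
    by (simp add: det_2 M_def power2_eq_square)
  ultimately have "det M \<noteq> 0" by linarith
  then have "invertible M" using invertible_det_nz by blast
  then have "\<exists>A'. M ** A' = mat 1 \<and> A' ** M = mat 1" by (simp add: invertible_def)
  then have "M ** matrix_inv M = mat 1 \<and> matrix_inv M ** M = mat 1"
    unfolding matrix_inv_def by (rule someI_ex)
  then have "matrix_inv M ** M = mat 1" by simp
  then show ?thesis
    by (simp add: Qmat_def gg_def[symmetric] M_def[symmetric] matrix_vector_mul_assoc)
qed

lemma Mv: "((vector [g, perp g] :: real^2^2) *v v) = vector [g \<bullet> v, perp g \<bullet> v]"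
  by (simp add: vec2_eq matrix_vector_mult_def sum_2 inner2)


lemma hvd_scale:
  "(g has_vector_derivative g') (at x) \<Longrightarrow> ((\<lambda>u. k *\<^sub>R g u) has_vector_derivative k *\<^sub>R g') (at x)"
  using has_vector_derivative_scaleR[OF DERIV_const[of k "at x"], of g g'] by simp

lemma star_deriv:
  fixes f :: "real^2 \<Rightarrow> real^2"
  assumes cf: "c2c f Df D2 r" and unit: "\<forall>i<m. norm (gam i) = 1"
    and \<psi>: "\<psi> \<in> sphere 0 1 - (Z1 m gam \<union> Z2 m c gam)"
  shows "((\<lambda>u. radon (star_transform m c gam f) \<psi> u) has_vector_derivative
     ((vector [gamma_psi m c gam \<psi>, perp (gamma_psi m c gam \<psi>)] :: real^2^2) *v radon f \<psi> s)) (at s)"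
proof -
  have np: "norm \<psi> = 1" using \<psi> by simp
  have a0: "\<psi> \<bullet> gam i \<noteq> 0" if "i < m" for i
    using \<psi> that by (auto simp: Z1_def)
  have ng: "norm (gam i) = 1" if "i < m" for i using unit that by blast
  define h1 where "h1 i = (\<lambda>y. f y \<bullet> gam i)" for i
  define h2 where "h2 i = (\<lambda>y. f y \<bullet> perp (gam i))" for i
  have b1: "beam (h1 i) r" for i unfolding h1_def by (rule beam_comp[OF cf])
  have b2: "beam (h2 i) r" for i unfolding h2_def by (rule beam_comp[OF cf])
  define R1 where "R1 i u = radon (divbeam (gam i) (h1 i)) \<psi> u" for i u
  define R2 where "R2 i u = radon (divbeam (gam i) (h2 i)) \<psi> u" for i u
  have R1e: "R1 i = radon (divbeam (gam i) (h1 i)) \<psi>" for i by (rule ext) (simp add: R1_def)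
  have R2e: "R2 i = radon (divbeam (gam i) (h2 i)) \<psi>" for i by (rule ext) (simp add: R2_def)
  have SI: "radon (star_transform m c gam f) \<psi> u = (\<Sum>i<m. c i *\<^sub>R (vector [R1 i u, R2 i u] :: real^2))" for u
  proof -
    have "((\<lambda>t. star_transform m c gam f (u *\<^sub>R \<psi> + t *\<^sub>R perp \<psi>)) has_integral
        (\<Sum>i<m. c i *\<^sub>R (vector [R1 i u, R2 i u] :: real^2))) UNIV"
      unfolding star_transform_def
    proof (intro has_integral_sum has_integral_cmul vec_has_int)
      fix i assume i: "i \<in> {..<m}"
      then have i': "i < m" by simp
      show "((\<lambda>t. divbeam (gam i) (\<lambda>y. f y \<bullet> gam i) (u *\<^sub>R \<psi> + t *\<^sub>R perp \<psi>)) has_integral R1 i u) UNIV"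
        using beam.L_int[OF b1[of i] ng[OF i'] np a0[OF i'], of u] by (simp add: R1_def h1_def)
      show "((\<lambda>t. divbeam (gam i) (\<lambda>y. f y \<bullet> perp (gam i)) (u *\<^sub>R \<psi> + t *\<^sub>R perp \<psi>)) has_integral R2 i u) UNIV"
        using beam.L_int[OF b2[of i] ng[OF i'] np a0[OF i'], of u] by (simp add: R2_def h2_def)
    qed simp
    then show ?thesis by (simp add: radon_def integral_unique)
  qed
  have "((\<lambda>u. \<Sum>i<m. c i *\<^sub>R (vector [R1 i u, R2 i u] :: real^2)) has_vector_derivative
      (\<Sum>i<m. c i *\<^sub>R (vector [- radon (h1 i) \<psi> s / (\<psi> \<bullet> gam i), - radon (h2 i) \<psi> s / (\<psi> \<bullet> gam i)] :: real^2))) (at s)"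
  proof (rule has_vector_derivative_sum, rule hvd_scale)
    fix i assume i: "i \<in> {..<m}"
    then have i': "i < m" by simp
    have d1: "(R1 i has_real_derivative - radon (h1 i) \<psi> s / (\<psi> \<bullet> gam i)) (at s)"
      using beam.L_F[OF b1[of i] ng[OF i'] np a0[OF i'], of s] by (simp add: R1e)
    have d2: "(R2 i has_real_derivative - radon (h2 i) \<psi> s / (\<psi> \<bullet> gam i)) (at s)"
      using beam.L_F[OF b2[of i] ng[OF i'] np a0[OF i'], of s] by (simp add: R2e)
    show "((\<lambda>u. vector [R1 i u, R2 i u] :: real^2) has_vector_derivative
      vector [- radon (h1 i) \<psi> s / (\<psi> \<bullet> gam i), - radon (h2 i) \<psi> s / (\<psi> \<bullet> gam i)]) (at s)"
      using vec_has_deriv[OF d1 d2] .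
  qed
  moreover have "(\<Sum>i<m. c i *\<^sub>R (vector [- radon (h1 i) \<psi> s / (\<psi> \<bullet> gam i), - radon (h2 i) \<psi> s / (\<psi> \<bullet> gam i)] :: real^2))
      = ((vector [gamma_psi m c gam \<psi>, perp (gamma_psi m c gam \<psi>)] :: real^2^2) *v radon f \<psi> s)"
  proof -
    define v where "v = radon f \<psi> s"
    have r1: "radon (h1 i) \<psi> s = v \<bullet> gam i" for i unfolding h1_def v_def by (rule radon_inner[OF cf np])
    have r2: "radon (h2 i) \<psi> s = v \<bullet> perp (gam i)" for i unfolding h2_def v_def by (rule radon_inner[OF cf np])
    have g1: "gamma_psi m c gam \<psi> \<bullet> v = (\<Sum>i<m. c i * (- (v \<bullet> gam i) / (\<psi> \<bullet> gam i)))"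
    proof -
      have "gamma_psi m c gam \<psi> \<bullet> v = - (\<Sum>i<m. (c i / (\<psi> \<bullet> gam i)) * (gam i \<bullet> v))"
        by (simp add: gamma_psi_def inner_sum_left)
      also have "\<dots> = (\<Sum>i<m. c i * (- (v \<bullet> gam i) / (\<psi> \<bullet> gam i)))"
        by (simp add: sum_negf[symmetric] inner_commute)
      finally show ?thesis .
    qed
    have g2: "perp (gamma_psi m c gam \<psi>) \<bullet> v = (\<Sum>i<m. c i * (- (v \<bullet> perp (gam i)) / (\<psi> \<bullet> gam i)))"
    proof -
      have "perp (gamma_psi m c gam \<psi>) \<bullet> v = - (\<Sum>i<m. (c i / (\<psi> \<bullet> gam i)) * (perp (gam i) \<bullet> v))"
        by (simp add: gamma_psi_def perp_minus perp_sum perp_scaleR inner_sum_left)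
      also have "\<dots> = (\<Sum>i<m. c i * (- (v \<bullet> perp (gam i)) / (\<psi> \<bullet> gam i)))"
        by (simp add: sum_negf[symmetric] inner_commute)
      finally show ?thesis .
    qed
    show ?thesis
      by (simp add: Mv v_def[symmetric] g1 g2 r1 r2 vec2_eq)
  qed
  ultimately show ?thesis by (simp add: SI)
qed


lemma star_key:
  fixes g :: "real^2 \<Rightarrow> real^2"
  assumes cg: "c2c g Dg D2g r" and unit: "\<forall>i<m. norm (gam i) = 1"
    and \<psi>: "\<psi> \<in> sphere 0 1 - (Z1 m gam \<union> Z2 m c gam)"
  shows "((\<lambda>u. radon (star_transform m c gam g) \<psi> u) has_vector_derivative
              vector_derivative (\<lambda>u. radon (star_transform m c gam g) \<psi> u) (at s)) (at s)"
    and "radon g \<psi> s = Qmat m c gam \<psi> *v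
              vector_derivative (\<lambda>u. radon (star_transform m c gam g) \<psi> u) (at s)"
proof -
  note d = star_deriv[OF cg unit \<psi>, of s]
  have vd: "vector_derivative (\<lambda>u. radon (star_transform m c gam g) \<psi> u) (at s) =
     (vector [gamma_psi m c gam \<psi>, perp (gamma_psi m c gam \<psi>)] :: real^2^2) *v radon g \<psi> s"
    by (rule vector_derivative_at[OF d])
  show "((\<lambda>u. radon (star_transform m c gam g) \<psi> u) has_vector_derivative
              vector_derivative (\<lambda>u. radon (star_transform m c gam g) \<psi> u) (at s)) (at s)"
    unfolding vd by (rule d)
  have "gamma_psi m c gam \<psi> \<noteq> 0" using \<psi> by (auto simp: Z2_def)
  then show "radon g \<psi> s = Qmat m c gam \<psi> *v
              vector_derivative (\<lambda>u. radon (star_transform m c gam g) \<psi> u) (at s)"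
    unfolding vd by (simp add: Qmat_inv)
qed

lemma inv_c2c:
  fixes g :: "real^2 \<Rightarrow> real^2"
  assumes cg: "c2c g Dg D2g r"
  shows "radon_inverse (radon g) x = g x"
proof -
  interpret c2c_pt g Dg D2g r x by (simp add: c2c_pt_def cg)
  show ?thesis by (rule inversion)
qed

theorem corollary1:
  fixes r :: real and m :: nat and c :: "nat \<Rightarrow> real" and gam :: "nat \<Rightarrow> real^2"
    and f :: "real^2 \<Rightarrow> real^2"
  assumes r: "r > 0"
    and unit: "\<forall>i<m. norm (gam i) = 1"
    and dist: "inj_on gam {..<m}"
    and cnz: "\<forall>i<m. c i \<noteq> 0"
    and fin: "finite (Z1 m gam \<union> Z2 m c gam)"
    and f: "C2c_field (ball 0 r) f"
  shows "(\<exists>F :: real^2 \<Rightarrow> real \<Rightarrow> real^2.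
           continuous_on (sphere 0 1 \<times> UNIV) (\<lambda>(psi, s). F psi s) \<and>
           (\<forall>psi \<in> sphere 0 1 - (Z1 m gam \<union> Z2 m c gam). \<forall>s.
              ((\<lambda>u. radon (star_transform m c gam f) psi u)
                 has_vector_derivative
                 vector_derivative (\<lambda>u. radon (star_transform m c gam f) psi u) (at s)) (at s) \<and>
              F psi s = Qmat m c gam psi *v
                 vector_derivative (\<lambda>u. radon (star_transform m c gam f) psi u) (at s)) \<and>
           (\<forall>psi \<in> sphere 0 1. \<forall>s. F psi s = radon f psi s) \<and>
           (\<forall>x \<in> ball 0 r. f x = radon_inverse F x)) \<and>
         (\<forall>g. C2c_field (ball 0 r) g \<and> star_transform m c gam g = star_transform m c gam f
           \<longrightarrow> g = f)"
proof -
  obtain Df D2 where cf: "c2c f Df D2 r" using C2c_to_c2c[OF f r] by blast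
  define Z where "Z = Z1 m gam \<union> Z2 m c gam"
  have part1: "continuous_on (sphere 0 1 \<times> UNIV) (\<lambda>(psi, s). radon f psi s) \<and>
           (\<forall>psi \<in> sphere 0 1 - (Z1 m gam \<union> Z2 m c gam). \<forall>s.
              ((\<lambda>u. radon (star_transform m c gam f) psi u)
                 has_vector_derivative
                 vector_derivative (\<lambda>u. radon (star_transform m c gam f) psi u) (at s)) (at s) \<and>
              radon f psi s = Qmat m c gam psi *v
                 vector_derivative (\<lambda>u. radon (star_transform m c gam f) psi u) (at s)) \<and>
           (\<forall>psi \<in> sphere 0 1. \<forall>s. radon f psi s = radon f psi s) \<and>
           (\<forall>x \<in> ball 0 r. f x = radon_inverse (radon f) x)"
    using c2c.radon_cont[OF cf] star_key[OF cf unit] inv_c2c[OF cf] by auto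
  have part2: "g = f" if g: "C2c_field (ball 0 r) g" and eqS: "star_transform m c gam g = star_transform m c gam f" for g
  proof -
    obtain Dg D2g where cg: "c2c g Dg D2g r" using C2c_to_c2c[OF g r] by blast
    have eqZ: "radon g \<psi> s = radon f \<psi> s" if "\<psi> \<in> sphere 0 1 - Z" for \<psi> s
      using star_key(2)[OF cg unit, where \<psi>=\<psi> and s=s and c=c] star_key(2)[OF cf unit, where \<psi>=\<psi> and s=s and c=c] that eqS
      by (simp add: Z_def)
    have cont: "continuous_on (sphere 0 1) (\<lambda>\<psi>. radon h \<psi> s)" if "c2c h Dh D2h r" for h :: "real^2 \<Rightarrow> real^2" and Dh D2h s
    proof -
      have "continuous_on (sphere 0 1) (\<lambda>\<psi>. (\<psi>, s))" by (intro continuous_intros)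
      from continuous_on_compose2[OF c2c.radon_cont[OF that] this]
      show ?thesis by auto
    qed
    have finZ: "finite Z" using fin by (simp add: Z_def)
    have eqS1: "radon g \<psi> s = radon f \<psi> s" if "\<psi> \<in> sphere 0 1" for \<psi> s
      by (rule dense_eq[OF finZ cont[OF cg] cont[OF cf] _ that]) (rule eqZ)
    have eqth: "radon g (vector [cos \<theta>, sin \<theta>]) = radon f (vector [cos \<theta>, sin \<theta>])" for \<theta>
    proof
      fix s
      have "vector [cos \<theta>, sin \<theta>] \<in> sphere (0::real^2) 1" using norm_om[of \<theta>] by (simp add: om_def)
      then show "radon g (vector [cos \<theta>, sin \<theta>]) s = radon f (vector [cos \<theta>, sin \<theta>]) s" by (rule eqS1)
    qed
    have "radon_inverse (radon g) x = radon_inverse (radon f) x" for x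
      by (simp add: radon_inverse_def Let_def eqth)
    then show "g = f" using inv_c2c[OF cg] inv_c2c[OF cf] by (intro ext) metis
  qed
  show ?thesis
    using part1 part2 by (intro conjI exI[of _ "radon f"]) auto
qed


end
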